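(* There is a constant $K$ depending only on $d$ and $S$ such that for every positive integer $R$ and every $L$ large enough that $\Omega_{2R+1}$ embeds in $\Lambda_L$ without wrap-around, $$\sum_{\{x,y\}\subset\Omega_{2R+1}:|x-y|=1}\bigl\|[[H_1',\mathbf{S}_x\cdot\mathbf{S}_y],H_1']\bigr\|\le KR^{d-2}.$$
   Context: Spin-$S$ operators $S_x^{(i)}$ ($i=1,2,3$) on sites of $\Lambda_L=\{-L+1,\dots,L\}^d$ with periodic boundary conditions, $[S_x^{(1)},S_x^{(2)}]=iS_x^{(3)}$ and cyclic, $\mathbf{S}_x\cdot\mathbf{S}_y=\sum_iS_x^{(i)}S_y^{(i)}$. For $x\in\mathbb{Z}^d$, $|x|_\infty=\max_i|x^{(i)}|$ and $\Omega_R=\{x:|x|_\infty\le R\}$. Define $f_x=1$ for $x\in\Omega_{R+1}$, $f_x=1-[|x|_\infty-(R+1)]/R$ for $x\in\Omega_{2R}\setminus\Omega_{R+1}$, and $f_x=0$ otherwise. $H_1'=\sum_{\{x,y\}\subset\Lambda_L:|x-y|=1}[S_x^{(1)}+S_y^{(1)}](f_x+f_y)$. *)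

theory Defs
  imports Complex_Main
begin

text \<open>Sites of Z^d are functions nat => int that vanish at coordinates i >= d.
  A basis configuration of the spin system assigns to each site of Lambda_L a
  local state k in {0..2S} (magnetic quantum number m = k - S), and 0 elsewhere.\<close>

type_synonym site = "nat \<Rightarrow> int"
type_synonym conf = "site \<Rightarrow> nat"
type_synonym op = "conf \<Rightarrow> conf \<Rightarrow> complex"

definition Lambda :: "nat \<Rightarrow> nat \<Rightarrow> site set" where
  "Lambda d L = {x. (\<forall>i<d. - int L + 1 \<le> x i \<and> x i \<le> int L) \<and> (\<forall>i\<ge>d. x i = 0)}"

definition supnorm :: "nat \<Rightarrow> site \<Rightarrow> int" where
  "supnorm d x = Max ((\<lambda>i. \<bar>x i\<bar>) ` {..<d})"

definition Omega :: "nat \<Rightarrow> int \<Rightarrow> site set" where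
  "Omega d R = {x. (\<forall>i<d. \<bar>x i\<bar> \<le> R) \<and> (\<forall>i\<ge>d. x i = 0)}"

definition adjZ :: "nat \<Rightarrow> site \<Rightarrow> site \<Rightarrow> bool" where
  "adjZ d x y \<longleftrightarrow> (\<Sum>i<d. (x i - y i)^2) = 1"

text \<open>Nearest neighbours on the torus Lambda_L (periodic boundary conditions, period 2L).\<close>
definition adjT :: "nat \<Rightarrow> nat \<Rightarrow> site \<Rightarrow> site \<Rightarrow> bool" where
  "adjT d L x y \<longleftrightarrow> (\<exists>i<d. (\<forall>j. j \<noteq> i \<longrightarrow> x j = y j) \<and>
      ((x i - y i) mod (2 * int L) = 1 \<or> (y i - x i) mod (2 * int L) = 1))"

definition edgesT :: "nat \<Rightarrow> nat \<Rightarrow> site set set" where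
  "edgesT d L = {{x, y} | x y. x \<in> Lambda d L \<and> y \<in> Lambda d L \<and> adjT d L x y}"

definition edgesZ :: "nat \<Rightarrow> site set \<Rightarrow> site set set" where
  "edgesZ d A = {{x, y} | x y. x \<in> A \<and> y \<in> A \<and> adjZ d x y}"

definition fcut :: "nat \<Rightarrow> nat \<Rightarrow> site \<Rightarrow> real" where
  "fcut d R x = (if x \<in> Omega d (int R + 1) then 1
      else if x \<in> Omega d (2 * int R) then 1 - (real_of_int (supnorm d x) - (real R + 1)) / real R
      else 0)"

text \<open>Standard spin-S matrices (twoS = 2S) in the basis k = 0..2S, m = k - S.\<close>
definition mval :: "nat \<Rightarrow> nat \<Rightarrow> real" where
  "mval twoS k = real k - real twoS / 2"

definition spinS :: "nat \<Rightarrow> real" where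
  "spinS twoS = real twoS / 2"

definition Splus :: "nat \<Rightarrow> nat \<Rightarrow> nat \<Rightarrow> complex" where
  "Splus twoS k l = (if k = l + 1 then
      complex_of_real (sqrt (spinS twoS * (spinS twoS + 1) - mval twoS l * (mval twoS l + 1))) else 0)"

definition Sminus :: "nat \<Rightarrow> nat \<Rightarrow> nat \<Rightarrow> complex" where
  "Sminus twoS k l = cnj (Splus twoS l k)"

definition spin :: "nat \<Rightarrow> nat \<Rightarrow> nat \<Rightarrow> nat \<Rightarrow> complex" where
  "spin twoS a k l =
     (if a = 1 then (Splus twoS k l + Sminus twoS k l) / 2
      else if a = 2 then (Splus twoS k l - Sminus twoS k l) / (2 * \<i>)
      else if a = 3 then (if k = l then complex_of_real (mval twoS k) else 0)
      else 0)"

definition confs :: "nat \<Rightarrow> nat \<Rightarrow> nat \<Rightarrow> conf set" where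
  "confs d twoS L = {\<sigma>. (\<forall>x\<in>Lambda d L. \<sigma> x \<le> twoS) \<and> (\<forall>x. x \<notin> Lambda d L \<longrightarrow> \<sigma> x = 0)}"

definition Sop :: "nat \<Rightarrow> site \<Rightarrow> nat \<Rightarrow> op" where
  "Sop twoS x a = (\<lambda>\<sigma> \<tau>. if (\<forall>z. z \<noteq> x \<longrightarrow> \<sigma> z = \<tau> z) then spin twoS a (\<sigma> x) (\<tau> x) else 0)"

definition opmult :: "conf set \<Rightarrow> op \<Rightarrow> op \<Rightarrow> op" where
  "opmult C A B = (\<lambda>\<sigma> \<tau>. \<Sum>\<rho>\<in>C. A \<sigma> \<rho> * B \<rho> \<tau>)"

definition opcomm :: "conf set \<Rightarrow> op \<Rightarrow> op \<Rightarrow> op" where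
  "opcomm C A B = (\<lambda>\<sigma> \<tau>. opmult C A B \<sigma> \<tau> - opmult C B A \<sigma> \<tau>)"

definition opnorm :: "conf set \<Rightarrow> op \<Rightarrow> real" where
  "opnorm C A = Sup {sqrt (\<Sum>\<sigma>\<in>C. (cmod (\<Sum>\<tau>\<in>C. A \<sigma> \<tau> * v \<tau>))^2) | v.
                      (\<Sum>\<sigma>\<in>C. (cmod (v \<sigma>))^2) \<le> 1}"

definition sdot :: "nat \<Rightarrow> nat \<Rightarrow> nat \<Rightarrow> site \<Rightarrow> site \<Rightarrow> op" where
  "sdot d twoS L x y = (\<lambda>\<sigma> \<tau>. \<Sum>a\<in>{1,2,3}. opmult (confs d twoS L) (Sop twoS x a) (Sop twoS y a) \<sigma> \<tau>)"

definition sdot_edge :: "nat \<Rightarrow> nat \<Rightarrow> nat \<Rightarrow> site set \<Rightarrow> op" where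
  "sdot_edge d twoS L e = (let p = (SOME p. e = {fst p, snd p}) in sdot d twoS L (fst p) (snd p))"

definition H1' :: "nat \<Rightarrow> nat \<Rightarrow> nat \<Rightarrow> nat \<Rightarrow> op" where
  "H1' d twoS L R = (\<lambda>\<sigma> \<tau>. \<Sum>e\<in>edgesT d L.
      complex_of_real (\<Sum>z\<in>e. fcut d R z) * (\<Sum>z\<in>e. Sop twoS z 1 \<sigma> \<tau>))"

end

theory Submission
  imports Defs "HOL-Analysis.Analysis"
begin


definition agree :: "site \<Rightarrow> conf \<Rightarrow> conf \<Rightarrow> bool" where
  "agree x \<sigma> \<tau> \<longleftrightarrow> (\<forall>z. z \<noteq> x \<longrightarrow> \<sigma> z = \<tau> z)"

lemma Sop_agree: "Sop twoS x a = (\<lambda>\<sigma> \<tau>. if agree x \<sigma> \<tau> then spin twoS a (\<sigma> x) (\<tau> x) else 0)"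
  unfolding Sop_def agree_def by simp

lemma Lambda_sub_Omega: "Lambda d L \<subseteq> Omega d (int L)"
  unfolding Lambda_def Omega_def by auto

lemma finite_Omega: "finite (Omega d N) \<and> card (Omega d N) \<le> nat (2*N+1) ^ d"
proof (induction d)
  case 0
  have "Omega 0 N = {\<lambda>_. 0}" unfolding Omega_def by auto
  then show ?case by simp
next
  case (Suc d)
  have sub: "Omega (Suc d) N \<subseteq> (\<lambda>(x,c). x(d := c)) ` (Omega d N \<times> {-N..N})"
  proof
    fix y assume y: "y \<in> Omega (Suc d) N"
    have "y = (y(d:=0))(d := y d)" by simp
    moreover have "y(d:=0) \<in> Omega d N" using y unfolding Omega_def by auto
    moreover have "y d \<in> {-N..N}" using y unfolding Omega_def by auto
    ultimately show "y \<in> (\<lambda>(x,c). x(d := c)) ` (Omega d N \<times> {-N..N})"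
      by (intro image_eqI[where x="(y(d:=0), y d)"]) auto
  qed
  have fin: "finite ((\<lambda>(x,c). x(d := c)) ` (Omega d N \<times> {-N..N}))" using Suc by auto
  have "card (Omega (Suc d) N) \<le> card ((\<lambda>(x,c). x(d := c)) ` (Omega d N \<times> {-N..N}))"
    by (rule card_mono[OF fin sub])
  also have "\<dots> \<le> card (Omega d N \<times> {-N..N})" by (rule card_image_le) (use Suc in auto)
  also have "\<dots> = card (Omega d N) * nat (2*N+1)" by (simp add: card_cartesian_product)
  also have "\<dots> \<le> nat (2*N+1) ^ d * nat (2*N+1)" using Suc by simp
  finally show ?case using finite_subset[OF sub fin] by (simp add: mult.commute)
qed

lemma finite_Lambda: "finite (Lambda d L)"
  using finite_Omega[of d "int L"] finite_subset[OF Lambda_sub_Omega] by blast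

lemma finite_confs: "finite (confs d twoS L)"
proof -
  have "confs d twoS L \<subseteq> {f. \<forall>x. (x \<in> Lambda d L \<longrightarrow> f x \<in> {..twoS}) \<and> (x \<notin> Lambda d L \<longrightarrow> f x = 0)}"
    unfolding confs_def by auto
  then show ?thesis by (rule finite_subset) (rule finite_set_of_finite_funs[OF finite_Lambda], simp)
qed



definition eqC :: "conf set \<Rightarrow> op \<Rightarrow> op \<Rightarrow> bool" where
  "eqC C M N \<longleftrightarrow> (\<forall>\<sigma>\<in>C. \<forall>\<tau>\<in>C. M \<sigma> \<tau> = N \<sigma> \<tau>)"

definition opadd :: "op \<Rightarrow> op \<Rightarrow> op" where "opadd M N = (\<lambda>\<sigma> \<tau>. M \<sigma> \<tau> + N \<sigma> \<tau>)"
definition opsub :: "op \<Rightarrow> op \<Rightarrow> op" where "opsub M N = (\<lambda>\<sigma> \<tau>. M \<sigma> \<tau> - N \<sigma> \<tau>)"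
definition opsc :: "complex \<Rightarrow> op \<Rightarrow> op" where "opsc c M = (\<lambda>\<sigma> \<tau>. c * M \<sigma> \<tau>)"
definition opsum :: "'i set \<Rightarrow> ('i \<Rightarrow> op) \<Rightarrow> op" where "opsum I F = (\<lambda>\<sigma> \<tau>. \<Sum>i\<in>I. F i \<sigma> \<tau>)"
definition opzero :: op where "opzero = (\<lambda>\<sigma> \<tau>. 0)"

lemma eqC_refl[simp]: "eqC C M M" by (simp add: eqC_def)
lemma eqC_sym: "eqC C M N \<Longrightarrow> eqC C N M" by (simp add: eqC_def)
lemma eqC_trans: "eqC C M N \<Longrightarrow> eqC C N K \<Longrightarrow> eqC C M K" by (simp add: eqC_def)

lemma opcomm_sub: "opcomm C A B = opsub (opmult C A B) (opmult C B A)"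
  by (simp add: opcomm_def opsub_def)

lemma opmult_assoc: "opmult C (opmult C A B) D = opmult C A (opmult C B D)"
  unfolding opmult_def
  by (auto simp: sum_distrib_left sum_distrib_right mult.assoc intro!: ext) (rule sum.swap)

lemma opmult_cong: "eqC C M M' \<Longrightarrow> eqC C N N' \<Longrightarrow> eqC C (opmult C M N) (opmult C M' N')"
  unfolding eqC_def opmult_def by auto

lemma opadd_cong: "eqC C M M' \<Longrightarrow> eqC C N N' \<Longrightarrow> eqC C (opadd M N) (opadd M' N')"
  unfolding eqC_def opadd_def by auto
lemma opsub_cong: "eqC C M M' \<Longrightarrow> eqC C N N' \<Longrightarrow> eqC C (opsub M N) (opsub M' N')"
  unfolding eqC_def opsub_def by auto
lemma opsc_cong: "eqC C M M' \<Longrightarrow> eqC C (opsc c M) (opsc c M')"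
  unfolding eqC_def opsc_def by auto
lemma opsum_cong: "(\<And>i. i \<in> I \<Longrightarrow> eqC C (F i) (G i)) \<Longrightarrow> eqC C (opsum I F) (opsum I G)"
  unfolding eqC_def opsum_def by (auto intro!: sum.cong)
lemma opcomm_cong: "eqC C M M' \<Longrightarrow> eqC C N N' \<Longrightarrow> eqC C (opcomm C M N) (opcomm C M' N')"
  unfolding opcomm_sub by (intro opsub_cong opmult_cong)

lemma opmult_add_left: "opmult C (opadd M N) K = opadd (opmult C M K) (opmult C N K)"
  unfolding opmult_def opadd_def by (auto simp: distrib_right sum.distrib intro!: ext)
lemma opmult_add_right: "opmult C K (opadd M N) = opadd (opmult C K M) (opmult C K N)"
  unfolding opmult_def opadd_def by (auto simp: distrib_left sum.distrib intro!: ext)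
lemma opmult_sub_left: "opmult C (opsub M N) K = opsub (opmult C M K) (opmult C N K)"
  unfolding opmult_def opsub_def by (auto simp: left_diff_distrib sum_subtractf intro!: ext)
lemma opmult_sub_right: "opmult C K (opsub M N) = opsub (opmult C K M) (opmult C K N)"
  unfolding opmult_def opsub_def by (auto simp: right_diff_distrib sum_subtractf intro!: ext)
lemma opmult_sc_left: "opmult C (opsc c M) K = opsc c (opmult C M K)"
  unfolding opmult_def opsc_def by (auto simp: sum_distrib_left mult.assoc intro!: ext)
lemma opmult_sc_right: "opmult C K (opsc c M) = opsc c (opmult C K M)"
  unfolding opmult_def opsc_def by (auto simp: sum_distrib_left mult.left_commute intro!: ext)
lemma opmult_sum_left: "opmult C (opsum I F) K = opsum I (\<lambda>i. opmult C (F i) K)"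
  unfolding opmult_def opsum_def by (auto simp: sum_distrib_right intro!: ext) (rule sum.swap)
lemma opmult_sum_right: "opmult C K (opsum I F) = opsum I (\<lambda>i. opmult C K (F i))"
  unfolding opmult_def opsum_def by (auto simp: sum_distrib_left intro!: ext) (rule sum.swap)

definition commC :: "conf set \<Rightarrow> op \<Rightarrow> op \<Rightarrow> bool" where
  "commC C P M \<longleftrightarrow> eqC C (opmult C P M) (opmult C M P)"

lemma commC_sym: "commC C P M \<Longrightarrow> commC C M P"
  unfolding commC_def by (rule eqC_sym)

lemma commC_refl: "commC C P P" unfolding commC_def by simp

lemma commC_mult: assumes "commC C P M" "commC C P N" shows "commC C P (opmult C M N)"
proof -
  have "eqC C (opmult C P (opmult C M N)) (opmult C (opmult C M P) N)"
    unfolding opmult_assoc[symmetric] using assms(1) unfolding commC_def by (rule opmult_cong) auto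
  also have "opmult C (opmult C M P) N = opmult C M (opmult C P N)" by (rule opmult_assoc)
  finally have 1: "eqC C (opmult C P (opmult C M N)) (opmult C M (opmult C P N))" .
  have "eqC C (opmult C M (opmult C P N)) (opmult C M (opmult C N P))"
    using assms(2) unfolding commC_def by (rule opmult_cong[OF eqC_refl])
  then show ?thesis using 1 unfolding commC_def opmult_assoc by (rule eqC_trans[rotated])
qed

lemma commC_add: "commC C P M \<Longrightarrow> commC C P N \<Longrightarrow> commC C P (opadd M N)"
  unfolding commC_def opmult_add_left opmult_add_right by (rule opadd_cong)
lemma commC_sub: "commC C P M \<Longrightarrow> commC C P N \<Longrightarrow> commC C P (opsub M N)"
  unfolding commC_def opmult_sub_left opmult_sub_right by (rule opsub_cong)
lemma commC_sc: "commC C P M \<Longrightarrow> commC C P (opsc c M)"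
  unfolding commC_def opmult_sc_left opmult_sc_right by (rule opsc_cong)
lemma commC_sum: "(\<And>i. i \<in> I \<Longrightarrow> commC C P (F i)) \<Longrightarrow> commC C P (opsum I F)"
  unfolding commC_def opmult_sum_left opmult_sum_right by (rule opsum_cong)
lemma commC_comm: "commC C P M \<Longrightarrow> commC C P N \<Longrightarrow> commC C P (opcomm C M N)"
  unfolding opcomm_sub by (intro commC_sub commC_mult)
lemma commC_add_left: "commC C P M \<Longrightarrow> commC C Q M \<Longrightarrow> commC C (opadd P Q) M"
  by (metis commC_add commC_sym)

lemma commC_opcomm_zero: "commC C P M \<Longrightarrow> eqC C (opcomm C P M) opzero"
  unfolding commC_def eqC_def opcomm_def opzero_def by auto

lemma opcomm_leibniz: "opcomm C P (opmult C M N) = opadd (opmult C (opcomm C P M) N) (opmult C M (opcomm C P N))"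
  unfolding opcomm_sub opmult_sub_left opmult_sub_right opmult_assoc
  by (auto simp: opadd_def opsub_def intro!: ext)

lemma opcomm_sum_left: "opcomm C (opsum I F) M = opsum I (\<lambda>i. opcomm C (F i) M)"
  unfolding opcomm_sub opmult_sum_left opmult_sum_right by (auto simp: opsub_def opsum_def sum_subtractf intro!: ext)
lemma opcomm_sum_right: "opcomm C M (opsum I F) = opsum I (\<lambda>i. opcomm C M (F i))"
  unfolding opcomm_sub opmult_sum_left opmult_sum_right by (auto simp: opsub_def opsum_def sum_subtractf intro!: ext)
lemma opcomm_sc_left: "opcomm C (opsc c M) N = opsc c (opcomm C M N)"
  unfolding opcomm_sub opmult_sc_left opmult_sc_right by (auto simp: opsub_def opsc_def right_diff_distrib intro!: ext)
lemma opcomm_sc_right: "opcomm C N (opsc c M) = opsc c (opcomm C N M)"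
  unfolding opcomm_sub opmult_sc_left opmult_sc_right by (auto simp: opsub_def opsc_def right_diff_distrib intro!: ext)
lemma opcomm_add_left: "opcomm C (opadd M N) K = opadd (opcomm C M K) (opcomm C N K)"
  unfolding opcomm_sub opmult_add_left opmult_add_right by (auto simp: opsub_def opadd_def intro!: ext)
lemma opcomm_add_right: "opcomm C K (opadd M N) = opadd (opcomm C K M) (opcomm C K N)"
  unfolding opcomm_sub opmult_add_left opmult_add_right by (auto simp: opsub_def opadd_def intro!: ext)
lemma opcomm_anti: "opcomm C M N = opsc (-1) (opcomm C N M)"
  by (auto simp: opcomm_def opsc_def intro!: ext)



definition ap :: "nat \<Rightarrow> nat \<Rightarrow> real" where "ap n l = sqrt (real ((n - l) * (l + 1)))"

lemma ap_sq: "(ap n l)^2 = real ((n - l) * (l + 1))"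
  unfolding ap_def by simp

lemma arg_eq: "l \<le> n \<Longrightarrow> spinS n * (spinS n + 1) - mval n l * (mval n l + 1) = real ((n - l) * (l + 1))"
  unfolding spinS_def mval_def by (simp add: of_nat_diff field_simps power2_eq_square)

lemma Splus_eq: "l \<le> n \<Longrightarrow> Splus n k l = (if k = Suc l then complex_of_real (ap n l) else 0)"
  unfolding Splus_def ap_def by (simp add: arg_eq)

lemma Sminus_eq: "k \<le> n \<Longrightarrow> Sminus n k l = (if l = Suc k then complex_of_real (ap n k) else 0)"
  unfolding Sminus_def by (simp add: Splus_eq)

lemma sum_SucL: "(\<Sum>j\<le>n. if k = Suc j then F j else 0) = (if 1 \<le> k \<and> k \<le> Suc n then F (k - 1) else (0::'a::comm_monoid_add))"
proof -
  have "(\<Sum>j\<le>n. if k = Suc j then F j else 0) = (\<Sum>j\<le>n. if j = k - 1 then (if 1 \<le> k then F j else 0) else 0)"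
    by (rule sum.cong) auto
  also have "\<dots> = (if 1 \<le> k \<and> k \<le> Suc n then F (k - 1) else 0)"
    by (subst sum.delta) auto
  finally show ?thesis .
qed

lemma sum_SucR: "(\<Sum>j\<le>n. if j = Suc k then F j else 0) = (if Suc k \<le> n then F (Suc k) else (0::'a::comm_monoid_add))"
  by (subst sum.delta) auto

lemma PM: assumes "k \<le> n" "l \<le> n"
  shows "(\<Sum>j\<le>n. Splus n k j * Sminus n j l) = (if k = l \<and> 1 \<le> k then complex_of_real (real ((n - (k-1)) * k)) else 0)"
proof -
  have "(\<Sum>j\<le>n. Splus n k j * Sminus n j l) = (\<Sum>j\<le>n. if k = Suc j then (if l = Suc j then complex_of_real ((ap n j)^2) else 0) else 0)"
    by (rule sum.cong) (auto simp: Splus_eq Sminus_eq power2_eq_square)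
  also have "\<dots> = (if k = l \<and> 1 \<le> k then complex_of_real (real ((n - (k-1)) * k)) else 0)"
    unfolding sum_SucL using assms by (auto simp: ap_sq)
  finally show ?thesis .
qed

lemma MP: assumes "k \<le> n" "l \<le> n"
  shows "(\<Sum>j\<le>n. Sminus n k j * Splus n j l) = (if k = l then complex_of_real (real ((n - k) * (k+1))) else 0)"
proof -
  have "(\<Sum>j\<le>n. Sminus n k j * Splus n j l) = (\<Sum>j\<le>n. if j = Suc k then (if j = Suc l then complex_of_real ((ap n k)^2) else 0) else 0)"
    by (rule sum.cong) (use assms in \<open>auto simp: Splus_eq Sminus_eq power2_eq_square\<close>)
  also have "\<dots> = (if k = l then complex_of_real (real ((n - k) * (k+1))) else 0)"
    unfolding sum_SucR using assms by (cases "k = n") (auto simp: ap_sq)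
  finally show ?thesis .
qed

lemma Z_right: assumes "l \<le> n" shows "(\<Sum>j\<le>n. A j * spin n 3 j l) = A l * complex_of_real (mval n l)"
proof -
  have "(\<Sum>j\<le>n. A j * spin n 3 j l) = (\<Sum>j\<le>n. if j = l then A j * complex_of_real (mval n l) else 0)"
    by (rule sum.cong) (auto simp: spin_def)
  then show ?thesis using assms by (simp add: sum.delta)
qed

lemma Z_left: assumes "k \<le> n" shows "(\<Sum>j\<le>n. spin n 3 k j * A j) = complex_of_real (mval n k) * A k"
proof -
  have "(\<Sum>j\<le>n. spin n 3 k j * A j) = (\<Sum>j\<le>n. if j = k then complex_of_real (mval n k) * A j else 0)"
    by (rule sum.cong) (auto simp: spin_def)
  then show ?thesis using assms by (simp add: sum.delta)
qed

lemma M1: assumes "k \<le> n" "l \<le> n"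
  shows "(\<Sum>j\<le>n. spin n 1 k j * spin n 2 j l - spin n 2 k j * spin n 1 j l) = \<i> * spin n 3 k l"
proof -
  have "(\<Sum>j\<le>n. spin n 1 k j * spin n 2 j l - spin n 2 k j * spin n 1 j l)
      = (\<Sum>j\<le>n. (Sminus n k j * Splus n j l - Splus n k j * Sminus n j l) / (2 * \<i>))"
    by (rule sum.cong) (auto simp: spin_def field_simps)
  also have "\<dots> = ((\<Sum>j\<le>n. Sminus n k j * Splus n j l) - (\<Sum>j\<le>n. Splus n k j * Sminus n j l)) / (2 * \<i>)"
    by (simp only: sum_subtractf[symmetric] sum_divide_distrib)
  also have "\<dots> = \<i> * spin n 3 k l"
    unfolding PM[OF assms] MP[OF assms] using assms
    by (auto simp: spin_def mval_def field_simps of_nat_diff not_less_eq_eq)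
  finally show ?thesis .
qed

lemma M2: assumes "k \<le> n" "l \<le> n"
  shows "(\<Sum>j\<le>n. spin n 1 k j * spin n 3 j l - spin n 3 k j * spin n 1 j l) = - \<i> * spin n 2 k l"
proof -
  have "(\<Sum>j\<le>n. spin n 1 k j * spin n 3 j l - spin n 3 k j * spin n 1 j l)
     = spin n 1 k l * complex_of_real (mval n l) - complex_of_real (mval n k) * spin n 1 k l"
    unfolding sum_subtractf Z_left[OF assms(1)] Z_right[OF assms(2)] ..
  also have "\<dots> = - \<i> * spin n 2 k l"
    using assms by (auto simp: spin_def Splus_eq Sminus_eq mval_def field_simps)
  finally show ?thesis .
qed

lemma M0: "(\<Sum>j\<le>n. spin n a k j * spin n a j l - spin n a k j * spin n a j l) = 0"
  by simp



lemma conf_upd_in: "\<sigma> \<in> confs d n L \<Longrightarrow> x \<in> Lambda d L \<Longrightarrow> j \<le> n \<Longrightarrow> \<sigma>(x := j) \<in> confs d n L"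
  unfolding confs_def by auto

lemma conf_le: "\<sigma> \<in> confs d n L \<Longrightarrow> x \<in> Lambda d L \<Longrightarrow> \<sigma> x \<le> n"
  unfolding confs_def by auto

lemma sum_single: "finite A \<Longrightarrow> a \<in> A \<Longrightarrow> (\<And>b. b \<in> A \<Longrightarrow> b \<noteq> a \<Longrightarrow> g b = 0) \<Longrightarrow> sum g A = g a"
  by (metis (mono_tags, lifting) sum.remove sum.neutral add.right_neutral DiffE singletonI)

lemma reindexR:
  assumes s: "\<sigma> \<in> confs d n L" and x: "x \<in> Lambda d L"
  shows "(\<Sum>\<rho>\<in>confs d n L. if agree x \<sigma> \<rho> then g \<rho> else 0) = (\<Sum>j\<le>n. g (\<sigma>(x := j)))"
proof -
  have "(\<Sum>\<rho>\<in>confs d n L. if agree x \<sigma> \<rho> then g \<rho> else 0) = sum g {\<rho>\<in>confs d n L. agree x \<sigma> \<rho>}"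
    by (simp add: sum.inter_filter finite_confs)
  also have "{\<rho>\<in>confs d n L. agree x \<sigma> \<rho>} = (\<lambda>j. \<sigma>(x := j)) ` {..n}"
  proof
    show "{\<rho> \<in> confs d n L. agree x \<sigma> \<rho>} \<subseteq> (\<lambda>j. \<sigma>(x := j)) ` {..n}"
    proof
      fix \<rho> assume r: "\<rho> \<in> {\<rho> \<in> confs d n L. agree x \<sigma> \<rho>}"
      then have "\<rho> = \<sigma>(x := \<rho> x)" unfolding agree_def by auto
      moreover have "\<rho> x \<le> n" using r x conf_le by auto
      ultimately show "\<rho> \<in> (\<lambda>j. \<sigma>(x := j)) ` {..n}" by auto
    qed
    show "(\<lambda>j. \<sigma>(x := j)) ` {..n} \<subseteq> {\<rho> \<in> confs d n L. agree x \<sigma> \<rho>}"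
      using conf_upd_in[OF s x] by (auto simp: agree_def)
  qed
  also have "sum g \<dots> = (\<Sum>j\<le>n. g (\<sigma>(x := j)))"
    by (rule sum.reindex_cong[where l="\<lambda>j. \<sigma>(x := j)"]) (auto simp: inj_on_def dest: fun_cong[where x=x])
  finally show ?thesis .
qed

lemma agree_upd: "agree x (\<sigma>(x := j)) \<tau> = agree x \<sigma> \<tau>"
  unfolding agree_def by auto

lemma mult_same_site:
  assumes s: "\<sigma> \<in> confs d n L" and x: "x \<in> Lambda d L"
  shows "opmult (confs d n L) (Sop n x a) (Sop n x b) \<sigma> \<tau>
    = (if agree x \<sigma> \<tau> then (\<Sum>j\<le>n. spin n a (\<sigma> x) j * spin n b j (\<tau> x)) else 0)"
proof -
  have "opmult (confs d n L) (Sop n x a) (Sop n x b) \<sigma> \<tau>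
     = (\<Sum>\<rho>\<in>confs d n L. if agree x \<sigma> \<rho> then spin n a (\<sigma> x) (\<rho> x) * Sop n x b \<rho> \<tau> else 0)"
    unfolding opmult_def Sop_agree by (rule sum.cong) auto
  also have "\<dots> = (\<Sum>j\<le>n. spin n a (\<sigma> x) j * Sop n x b (\<sigma>(x:=j)) \<tau>)"
    by (subst reindexR[OF s x]) simp
  also have "\<dots> = (if agree x \<sigma> \<tau> then (\<Sum>j\<le>n. spin n a (\<sigma> x) j * spin n b j (\<tau> x)) else 0)"
    unfolding Sop_agree agree_upd by auto
  finally show ?thesis .
qed

lemma comm_same_site:
  assumes x: "x \<in> Lambda d L"
  shows "eqC (confs d n L) (opcomm (confs d n L) (Sop n x a) (Sop n x b))
     (\<lambda>\<sigma> \<tau>. if agree x \<sigma> \<tau> then (\<Sum>j\<le>n. spin n a (\<sigma> x) j * spin n b j (\<tau> x) - spin n b (\<sigma> x) j * spin n a j (\<tau> x)) else 0)"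
  unfolding eqC_def opcomm_def using x by (auto simp: mult_same_site sum_subtractf)

lemma comm12:
  assumes x: "x \<in> Lambda d L"
  shows "eqC (confs d n L) (opcomm (confs d n L) (Sop n x 1) (Sop n x 2)) (opsc \<i> (Sop n x 3))"
proof -
  have "eqC (confs d n L) (\<lambda>\<sigma> \<tau>. if agree x \<sigma> \<tau> then (\<Sum>j\<le>n. spin n 1 (\<sigma> x) j * spin n 2 j (\<tau> x) - spin n 2 (\<sigma> x) j * spin n 1 j (\<tau> x)) else 0) (opsc \<i> (Sop n x 3))"
    unfolding eqC_def opsc_def Sop_agree using x by (auto simp: M1[simplified] conf_le)
  then show ?thesis using comm_same_site[OF x] eqC_trans by blast
qed

lemma comm13:
  assumes x: "x \<in> Lambda d L"
  shows "eqC (confs d n L) (opcomm (confs d n L) (Sop n x 1) (Sop n x 3)) (opsc (-\<i>) (Sop n x 2))"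
proof -
  have "eqC (confs d n L) (\<lambda>\<sigma> \<tau>. if agree x \<sigma> \<tau> then (\<Sum>j\<le>n. spin n 1 (\<sigma> x) j * spin n 3 j (\<tau> x) - spin n 3 (\<sigma> x) j * spin n 1 j (\<tau> x)) else 0) (opsc (-\<i>) (Sop n x 2))"
    unfolding eqC_def opsc_def Sop_agree using x by (auto simp: M2[simplified] conf_le)
  then show ?thesis using comm_same_site[OF x] eqC_trans by blast
qed

lemma two_site:
  assumes zw: "z \<noteq> w" and s: "\<sigma> \<in> confs d n L" and t: "\<tau> \<in> confs d n L"
  shows "opmult (confs d n L) (Sop n z a) (Sop n w b) \<sigma> \<tau>
     = (if (\<forall>u. u \<noteq> z \<longrightarrow> u \<noteq> w \<longrightarrow> \<sigma> u = \<tau> u) then spin n a (\<sigma> z) (\<tau> z) * spin n b (\<sigma> w) (\<tau> w) else 0)"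
proof -
  let ?r = "\<sigma>(z := \<tau> z)"
  have r: "?r \<in> confs d n L" using s t unfolding confs_def by auto
  have "opmult (confs d n L) (Sop n z a) (Sop n w b) \<sigma> \<tau> = Sop n z a \<sigma> ?r * Sop n w b ?r \<tau>"
    unfolding opmult_def
  proof (rule sum_single[OF finite_confs r])
    fix \<rho> assume "\<rho> \<in> confs d n L" "\<rho> \<noteq> ?r"
    then obtain u where u: "\<rho> u \<noteq> ?r u" by (meson ext)
    show "Sop n z a \<sigma> \<rho> * Sop n w b \<rho> \<tau> = 0"
      using u zw unfolding Sop_def by (cases "u = z") auto
  qed
  also have "\<dots> = (if (\<forall>u. u \<noteq> z \<longrightarrow> u \<noteq> w \<longrightarrow> \<sigma> u = \<tau> u) then spin n a (\<sigma> z) (\<tau> z) * spin n b (\<sigma> w) (\<tau> w) else 0)"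
    unfolding Sop_def using zw by auto
  finally show ?thesis .
qed

lemma comm_diff_site:
  assumes zw: "z \<noteq> w"
  shows "commC (confs d n L) (Sop n z a) (Sop n w b)"
  unfolding commC_def eqC_def using zw by (auto simp: two_site mult.commute)



lemma sdot_opsum: "sdot d n L x y = opsum {1,2,3} (\<lambda>a. opmult (confs d n L) (Sop n x a) (Sop n y a))"
  unfolding sdot_def opsum_def ..

lemma ptL: "eqC C M M' \<Longrightarrow> \<sigma> \<in> C \<Longrightarrow> opmult C M N \<sigma> \<tau> = opmult C M' N \<sigma> \<tau>"
  unfolding eqC_def opmult_def by auto
lemma ptR: "eqC C N N' \<Longrightarrow> \<tau> \<in> C \<Longrightarrow> opmult C M N \<sigma> \<tau> = opmult C M N' \<sigma> \<tau>"
  unfolding eqC_def opmult_def by auto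
lemma opmult_zero_left: "opmult C opzero N = opzero" unfolding opmult_def opzero_def by auto
lemma opmult_zero_right: "opmult C N opzero = opzero" unfolding opmult_def opzero_def by auto
lemma opmult_zero_left': "opmult C (\<lambda>\<sigma> \<tau>. 0) N \<sigma> \<tau> = 0" unfolding opmult_def by auto
lemma opmult_zero_right': "opmult C N (\<lambda>\<sigma> \<tau>. 0) \<sigma> \<tau> = 0" unfolding opmult_def by auto
lemma opcomm_self: "opcomm C M M = opzero" unfolding opcomm_def opzero_def by auto

lemma eqC_zero_commC: "eqC C (opcomm C P M) opzero \<Longrightarrow> commC C P M"
  unfolding commC_def eqC_def opcomm_def opzero_def by auto

lemma F1:
  assumes "z \<noteq> x" "z \<noteq> y"
  shows "commC (confs d n L) (Sop n z 1) (sdot d n L x y)"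
  unfolding sdot_opsum using assms by (intro commC_sum commC_mult comm_diff_site) auto

lemma F2:
  assumes xy: "x \<noteq> y" and x: "x \<in> Lambda d L" and y: "y \<in> Lambda d L"
  shows "commC (confs d n L) (opadd (Sop n x 1) (Sop n y 1)) (sdot d n L x y)"
proof (rule eqC_zero_commC)
  let ?C = "confs d n L"
  have z1: "\<And>M \<sigma> \<tau> a. \<tau> \<in> ?C \<Longrightarrow> opmult ?C M (opcomm ?C (Sop n x (Suc 0)) (Sop n y a)) \<sigma> \<tau> = 0"
    by (subst ptR[OF commC_opcomm_zero[OF comm_diff_site]]) (use xy in \<open>simp_all only: opmult_zero_right, simp_all add: opzero_def\<close>)
  have z2: "\<And>M \<sigma> \<tau> a. \<sigma> \<in> ?C \<Longrightarrow> opmult ?C (opcomm ?C (Sop n y (Suc 0)) (Sop n x a)) M \<sigma> \<tau> = 0"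
    by (subst ptL[OF commC_opcomm_zero[OF comm_diff_site]]) (use xy in \<open>simp_all only: opmult_zero_left, simp_all add: opzero_def\<close>)
  have c12x: "\<And>M \<sigma> \<tau>. \<sigma> \<in> ?C \<Longrightarrow> opmult ?C (opcomm ?C (Sop n x (Suc 0)) (Sop n x 2)) M \<sigma> \<tau> = \<i> * opmult ?C (Sop n x 3) M \<sigma> \<tau>"
    by (subst ptL[OF comm12[OF x, unfolded One_nat_def]]) (simp_all only: opmult_sc_left, simp_all add: opsc_def)
  have c13x: "\<And>M \<sigma> \<tau>. \<sigma> \<in> ?C \<Longrightarrow> opmult ?C (opcomm ?C (Sop n x (Suc 0)) (Sop n x 3)) M \<sigma> \<tau> = - \<i> * opmult ?C (Sop n x 2) M \<sigma> \<tau>"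
    by (subst ptL[OF comm13[OF x, unfolded One_nat_def]]) (simp_all only: opmult_sc_left, simp_all add: opsc_def)
  have c12y: "\<And>M \<sigma> \<tau>. \<tau> \<in> ?C \<Longrightarrow> opmult ?C M (opcomm ?C (Sop n y (Suc 0)) (Sop n y 2)) \<sigma> \<tau> = \<i> * opmult ?C M (Sop n y 3) \<sigma> \<tau>"
    by (subst ptR[OF comm12[OF y, unfolded One_nat_def]]) (simp_all only: opmult_sc_right, simp_all add: opsc_def)
  have c13y: "\<And>M \<sigma> \<tau>. \<tau> \<in> ?C \<Longrightarrow> opmult ?C M (opcomm ?C (Sop n y (Suc 0)) (Sop n y 3)) \<sigma> \<tau> = - \<i> * opmult ?C M (Sop n y 2) \<sigma> \<tau>"
    by (subst ptR[OF comm13[OF y, unfolded One_nat_def]]) (simp_all only: opmult_sc_right, simp_all add: opsc_def)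
  show "eqC ?C (opcomm ?C (opadd (Sop n x 1) (Sop n y 1)) (sdot d n L x y)) opzero"
    unfolding eqC_def
  proof (intro ballI)
    fix \<sigma> \<tau> assume s: "\<sigma> \<in> ?C" and t: "\<tau> \<in> ?C"
    show "opcomm ?C (opadd (Sop n x 1) (Sop n y 1)) (sdot d n L x y) \<sigma> \<tau> = opzero \<sigma> \<tau>"
      unfolding sdot_opsum opcomm_add_left opcomm_sum_right opcomm_leibniz opmult_add_left opmult_add_right
      using s t by (simp add: opadd_def opsum_def z1 z2 c12x c13x c12y c13y opcomm_self
          opmult_zero_left' opmult_zero_right' opzero_def)
  qed
qed



lemma sum_two: assumes "finite A" "x \<noteq> y" "x \<in> A" "y \<in> A" "\<And>z. z \<in> A \<Longrightarrow> z \<noteq> x \<Longrightarrow> z \<noteq> y \<Longrightarrow> g z = 0"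
  shows "sum g A = g x + g y"
proof -
  have "sum g A = sum g {x, y}"
    by (rule sum.mono_neutral_right) (use assms in auto)
  then show ?thesis using assms by simp
qed

declare eqC_trans[trans]

lemma double_comm:
  fixes h :: "site \<Rightarrow> complex" and n d L :: nat
  assumes xy: "x \<noteq> y" and x: "x \<in> Lambda d L" and y: "y \<in> Lambda d L"
  defines "C \<equiv> confs d n L"
  defines "H \<equiv> opsum (Lambda d L) (\<lambda>z. opsc (h z) (Sop n z 1))"
  defines "A \<equiv> sdot d n L x y"
  defines "D \<equiv> opcomm C (Sop n x 1) A"
  shows "eqC C (opcomm C (opcomm C H A) H) (opsc ((h x - h y)^2) (opcomm C D (Sop n x 1)))"
proof -
  have finL: "finite (Lambda d L)" by (rule finite_Lambda)
  have F2': "\<And>\<sigma> \<tau>. \<sigma> \<in> C \<Longrightarrow> \<tau> \<in> C \<Longrightarrow> opcomm C (Sop n y 1) A \<sigma> \<tau> = - D \<sigma> \<tau>"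
  proof -
    fix \<sigma> \<tau> assume "\<sigma> \<in> C" "\<tau> \<in> C"
    then have "opcomm C (opadd (Sop n x 1) (Sop n y 1)) A \<sigma> \<tau> = 0"
      using commC_opcomm_zero[OF F2[OF xy x y]] unfolding eqC_def opzero_def C_def A_def by auto
    then have "opadd (opcomm C (Sop n x 1) A) (opcomm C (Sop n y 1) A) \<sigma> \<tau> = 0"
      by (simp only: opcomm_add_left)
    then show "opcomm C (Sop n y 1) A \<sigma> \<tau> = - D \<sigma> \<tau>"
      unfolding D_def opadd_def by (simp add: add_eq_0_iff)
  qed
  have step1: "eqC C (opcomm C H A) (opsc (h x - h y) D)"
    unfolding eqC_def
  proof (intro ballI)
    fix \<sigma> \<tau> assume s: "\<sigma> \<in> C" and t: "\<tau> \<in> C"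
    have "opcomm C H A \<sigma> \<tau> = (\<Sum>z\<in>Lambda d L. h z * opcomm C (Sop n z 1) A \<sigma> \<tau>)"
      unfolding H_def opcomm_sum_left opcomm_sc_left by (simp add: opsum_def opsc_def)
    also have "\<dots> = h x * opcomm C (Sop n x 1) A \<sigma> \<tau> + h y * opcomm C (Sop n y 1) A \<sigma> \<tau>"
    proof (rule sum_two[OF finL xy x y])
      fix z assume "z \<in> Lambda d L" "z \<noteq> x" "z \<noteq> y"
      then show "h z * opcomm C (Sop n z 1) A \<sigma> \<tau> = 0"
        using commC_opcomm_zero[OF F1] s t unfolding eqC_def opzero_def C_def A_def by auto
    qed
    also have "\<dots> = opsc (h x - h y) D \<sigma> \<tau>"
      using F2'[OF s t] unfolding D_def opsc_def by (simp add: algebra_simps)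
    finally show "opcomm C H A \<sigma> \<tau> = opsc (h x - h y) D \<sigma> \<tau>" .
  qed
  have cD: "\<And>z. z \<noteq> x \<Longrightarrow> z \<noteq> y \<Longrightarrow> commC C (Sop n z 1) D"
    unfolding D_def C_def A_def by (intro commC_comm comm_diff_site F1) auto
  have cT: "commC C (opadd (Sop n x 1) (Sop n y 1)) D"
    unfolding D_def C_def A_def
    by (intro commC_comm F2[OF xy x y] commC_add_left commC_refl comm_diff_site) (use xy in auto)
  have D2: "\<And>\<sigma> \<tau>. \<sigma> \<in> C \<Longrightarrow> \<tau> \<in> C \<Longrightarrow> opcomm C D (Sop n y 1) \<sigma> \<tau> = - opcomm C D (Sop n x 1) \<sigma> \<tau>"
  proof -
    fix \<sigma> \<tau> assume "\<sigma> \<in> C" "\<tau> \<in> C"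
    then have "opcomm C D (opadd (Sop n x 1) (Sop n y 1)) \<sigma> \<tau> = 0"
      using commC_opcomm_zero[OF commC_sym[OF cT]] unfolding eqC_def opzero_def by auto
    then have "opadd (opcomm C D (Sop n x 1)) (opcomm C D (Sop n y 1)) \<sigma> \<tau> = 0"
      by (simp only: opcomm_add_right)
    then show "opcomm C D (Sop n y 1) \<sigma> \<tau> = - opcomm C D (Sop n x 1) \<sigma> \<tau>"
      unfolding opadd_def by (simp add: add_eq_0_iff)
  qed
  have "eqC C (opcomm C (opcomm C H A) H) (opcomm C (opsc (h x - h y) D) H)"
    by (rule opcomm_cong[OF step1 eqC_refl])
  also have "opcomm C (opsc (h x - h y) D) H = opsc (h x - h y) (opsum (Lambda d L) (\<lambda>z. opsc (h z) (opcomm C D (Sop n z 1))))"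
    unfolding opcomm_sc_left H_def opcomm_sum_right opcomm_sc_right
    by (auto simp: opsum_def opsc_def sum_distrib_left algebra_simps intro!: ext)
  also have "eqC C \<dots> (opsc ((h x - h y)^2) (opcomm C D (Sop n x 1)))"
    unfolding eqC_def
  proof (intro ballI)
    fix \<sigma> \<tau> assume s: "\<sigma> \<in> C" and t: "\<tau> \<in> C"
    have "(\<Sum>z\<in>Lambda d L. h z * opcomm C D (Sop n z 1) \<sigma> \<tau>) = h x * opcomm C D (Sop n x 1) \<sigma> \<tau> + h y * opcomm C D (Sop n y 1) \<sigma> \<tau>"
    proof (rule sum_two[OF finL xy x y])
      fix z assume "z \<in> Lambda d L" "z \<noteq> x" "z \<noteq> y"
      then show "h z * opcomm C D (Sop n z 1) \<sigma> \<tau> = 0"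
        using commC_opcomm_zero[OF commC_sym[OF cD]] s t unfolding eqC_def opzero_def by auto
    qed
    also have "\<dots> = (h x - h y) * opcomm C D (Sop n x 1) \<sigma> \<tau>"
      unfolding D2[OF s t] by (simp add: algebra_simps)
    finally have S: "(\<Sum>z\<in>Lambda d L. h z * opcomm C D (Sop n z 1) \<sigma> \<tau>) = (h x - h y) * opcomm C D (Sop n x 1) \<sigma> \<tau>" .
    show "opsc (h x - h y) (opsum (Lambda d L) (\<lambda>z. opsc (h z) (opcomm C D (Sop n z 1)))) \<sigma> \<tau>
        = opsc ((h x - h y)^2) (opcomm C D (Sop n x 1)) \<sigma> \<tau>"
      unfolding opsc_def opsum_def S by (simp add: power2_eq_square)
  qed
  finally show ?thesis .
qed



definition bnd :: "conf set \<Rightarrow> op \<Rightarrow> real \<Rightarrow> bool" where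
  "bnd C M r \<longleftrightarrow> (\<forall>\<sigma>\<in>C. (\<Sum>\<tau>\<in>C. cmod (M \<sigma> \<tau>)) \<le> r) \<and> (\<forall>\<tau>\<in>C. (\<Sum>\<sigma>\<in>C. cmod (M \<sigma> \<tau>)) \<le> r)"

lemma bnd_nonneg: "bnd C M r \<Longrightarrow> C \<noteq> {} \<Longrightarrow> 0 \<le> r"
proof -
  assume b: "bnd C M r" and ne: "C \<noteq> {}"
  then obtain \<sigma> where s: "\<sigma> \<in> C" by blast
  have "0 \<le> (\<Sum>\<tau>\<in>C. cmod (M \<sigma> \<tau>))" by (rule sum_nonneg) simp
  also have "\<dots> \<le> r" using b s unfolding bnd_def by blast
  finally show "0 \<le> r" .
qed

lemma bnd_mult:
  assumes fin: "finite C" and M: "bnd C M r1" and N: "bnd C N r2" and r: "0 \<le> r1" "0 \<le> r2"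
  shows "bnd C (opmult C M N) (r1 * r2)"
  unfolding bnd_def
proof (intro conjI ballI)
  fix \<sigma> assume s: "\<sigma> \<in> C"
  have "(\<Sum>\<tau>\<in>C. cmod (opmult C M N \<sigma> \<tau>)) \<le> (\<Sum>\<tau>\<in>C. \<Sum>\<rho>\<in>C. cmod (M \<sigma> \<rho>) * cmod (N \<rho> \<tau>))"
    unfolding opmult_def by (intro sum_mono order_trans[OF norm_sum]) (simp add: norm_mult)
  also have "\<dots> = (\<Sum>\<rho>\<in>C. cmod (M \<sigma> \<rho>) * (\<Sum>\<tau>\<in>C. cmod (N \<rho> \<tau>)))"
    by (subst sum.swap) (simp add: sum_distrib_left)
  also have "\<dots> \<le> (\<Sum>\<rho>\<in>C. cmod (M \<sigma> \<rho>) * r2)"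
    using N unfolding bnd_def by (intro sum_mono mult_left_mono) auto
  also have "\<dots> \<le> r1 * r2"
    using M s r unfolding bnd_def by (simp add: sum_distrib_right[symmetric] mult_right_mono)
  finally show "(\<Sum>\<tau>\<in>C. cmod (opmult C M N \<sigma> \<tau>)) \<le> r1 * r2" .
next
  fix \<tau> assume t: "\<tau> \<in> C"
  have "(\<Sum>\<sigma>\<in>C. cmod (opmult C M N \<sigma> \<tau>)) \<le> (\<Sum>\<sigma>\<in>C. \<Sum>\<rho>\<in>C. cmod (M \<sigma> \<rho>) * cmod (N \<rho> \<tau>))"
    unfolding opmult_def by (intro sum_mono order_trans[OF norm_sum]) (simp add: norm_mult)
  also have "\<dots> = (\<Sum>\<rho>\<in>C. (\<Sum>\<sigma>\<in>C. cmod (M \<sigma> \<rho>)) * cmod (N \<rho> \<tau>))"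
    by (subst sum.swap) (simp add: sum_distrib_right)
  also have "\<dots> \<le> (\<Sum>\<rho>\<in>C. r1 * cmod (N \<rho> \<tau>))"
    using M unfolding bnd_def by (intro sum_mono mult_right_mono) auto
  also have "\<dots> \<le> r1 * r2"
    using N t r unfolding bnd_def by (simp add: sum_distrib_left[symmetric] mult_left_mono)
  finally show "(\<Sum>\<sigma>\<in>C. cmod (opmult C M N \<sigma> \<tau>)) \<le> r1 * r2" .
qed

lemma bnd_sub: "bnd C M r1 \<Longrightarrow> bnd C N r2 \<Longrightarrow> bnd C (opsub M N) (r1 + r2)"
  unfolding bnd_def opsub_def
proof (intro conjI ballI; elim conjE)
  fix \<sigma> assume a: "\<forall>\<sigma>\<in>C. (\<Sum>\<tau>\<in>C. cmod (M \<sigma> \<tau>)) \<le> r1" "\<forall>\<sigma>\<in>C. (\<Sum>\<tau>\<in>C. cmod (N \<sigma> \<tau>)) \<le> r2" "\<sigma> \<in> C"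
  have "(\<Sum>\<tau>\<in>C. cmod (M \<sigma> \<tau> - N \<sigma> \<tau>)) \<le> (\<Sum>\<tau>\<in>C. cmod (M \<sigma> \<tau>) + cmod (N \<sigma> \<tau>))"
    by (intro sum_mono norm_triangle_ineq4)
  also have "\<dots> \<le> r1 + r2" using a by (simp add: sum.distrib add_mono)
  finally show "(\<Sum>\<tau>\<in>C. cmod (M \<sigma> \<tau> - N \<sigma> \<tau>)) \<le> r1 + r2" .
next
  fix \<tau> assume a: "\<forall>\<tau>\<in>C. (\<Sum>\<sigma>\<in>C. cmod (M \<sigma> \<tau>)) \<le> r1" "\<forall>\<tau>\<in>C. (\<Sum>\<sigma>\<in>C. cmod (N \<sigma> \<tau>)) \<le> r2" "\<tau> \<in> C"
  have "(\<Sum>\<sigma>\<in>C. cmod (M \<sigma> \<tau> - N \<sigma> \<tau>)) \<le> (\<Sum>\<sigma>\<in>C. cmod (M \<sigma> \<tau>) + cmod (N \<sigma> \<tau>))"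
    by (intro sum_mono norm_triangle_ineq4)
  also have "\<dots> \<le> r1 + r2" using a by (simp add: sum.distrib add_mono)
  finally show "(\<Sum>\<sigma>\<in>C. cmod (M \<sigma> \<tau> - N \<sigma> \<tau>)) \<le> r1 + r2" .
qed

lemma bnd_comm: "finite C \<Longrightarrow> bnd C M r1 \<Longrightarrow> bnd C N r2 \<Longrightarrow> 0 \<le> r1 \<Longrightarrow> 0 \<le> r2 \<Longrightarrow> bnd C (opcomm C M N) (2 * (r1 * r2))"
proof -
  assume a: "finite C" "bnd C M r1" "bnd C N r2" "0 \<le> r1" "0 \<le> r2"
  have "bnd C (opsub (opmult C M N) (opmult C N M)) (r1 * r2 + r2 * r1)"
    by (rule bnd_sub; rule bnd_mult) (use a in auto)
  then show ?thesis unfolding opcomm_sub by (simp add: mult.commute)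
qed

lemma bnd_sum: fixes r :: real shows "finite I \<Longrightarrow> (\<And>i. i \<in> I \<Longrightarrow> bnd C (F i) r) \<Longrightarrow> bnd C (opsum I F) (card I * r)"
  unfolding bnd_def opsum_def
proof (intro conjI ballI)
  assume fin: "finite I" and b: "\<And>i. i \<in> I \<Longrightarrow> (\<forall>\<sigma>\<in>C. (\<Sum>\<tau>\<in>C. cmod (F i \<sigma> \<tau>)) \<le> r) \<and> (\<forall>\<tau>\<in>C. (\<Sum>\<sigma>\<in>C. cmod (F i \<sigma> \<tau>)) \<le> r)"
  fix \<sigma> assume s: "\<sigma> \<in> C"
  have "(\<Sum>\<tau>\<in>C. cmod (\<Sum>i\<in>I. F i \<sigma> \<tau>)) \<le> (\<Sum>\<tau>\<in>C. \<Sum>i\<in>I. cmod (F i \<sigma> \<tau>))"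
    by (intro sum_mono norm_sum)
  also have "\<dots> = (\<Sum>i\<in>I. \<Sum>\<tau>\<in>C. cmod (F i \<sigma> \<tau>))" by (rule sum.swap)
  also have "\<dots> \<le> (\<Sum>i\<in>I. r)" using b s by (intro sum_mono) auto
  finally show "(\<Sum>\<tau>\<in>C. cmod (\<Sum>i\<in>I. F i \<sigma> \<tau>)) \<le> real (card I) * r" by simp
next
  assume fin: "finite I" and b: "\<And>i. i \<in> I \<Longrightarrow> (\<forall>\<sigma>\<in>C. (\<Sum>\<tau>\<in>C. cmod (F i \<sigma> \<tau>)) \<le> r) \<and> (\<forall>\<tau>\<in>C. (\<Sum>\<sigma>\<in>C. cmod (F i \<sigma> \<tau>)) \<le> r)"
  fix \<tau> assume s: "\<tau> \<in> C"
  have "(\<Sum>\<sigma>\<in>C. cmod (\<Sum>i\<in>I. F i \<sigma> \<tau>)) \<le> (\<Sum>\<sigma>\<in>C. \<Sum>i\<in>I. cmod (F i \<sigma> \<tau>))"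
    by (intro sum_mono norm_sum)
  also have "\<dots> = (\<Sum>i\<in>I. \<Sum>\<sigma>\<in>C. cmod (F i \<sigma> \<tau>))" by (rule sum.swap)
  also have "\<dots> \<le> (\<Sum>i\<in>I. r)" using b s by (intro sum_mono) auto
  finally show "(\<Sum>\<sigma>\<in>C. cmod (\<Sum>i\<in>I. F i \<sigma> \<tau>)) \<le> real (card I) * r" by simp
qed

lemma bnd_sc: "bnd C M r \<Longrightarrow> bnd C (opsc c M) (cmod c * r)"
  unfolding bnd_def opsc_def by (simp add: norm_mult sum_distrib_left[symmetric] mult_left_mono)

lemma opnorm_eqC: "eqC C M N \<Longrightarrow> opnorm C M = opnorm C N"
proof -
  assume e: "eqC C M N"
  have "\<And>v. (\<Sum>\<sigma>\<in>C. (cmod (\<Sum>\<tau>\<in>C. M \<sigma> \<tau> * v \<tau>))\<^sup>2) = (\<Sum>\<sigma>\<in>C. (cmod (\<Sum>\<tau>\<in>C. N \<sigma> \<tau> * v \<tau>))\<^sup>2)"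
    using e unfolding eqC_def by (intro sum.cong refl arg_cong[where f="\<lambda>z. (cmod z)^2"]) auto
  then show ?thesis unfolding opnorm_def by simp
qed

lemma schur:
  assumes fin: "finite C" and b: "bnd C M r" and r: "0 \<le> r"
  shows "opnorm C M \<le> r"
  unfolding opnorm_def
proof (rule cSup_least)
  show "{sqrt (\<Sum>\<sigma>\<in>C. (cmod (\<Sum>\<tau>\<in>C. M \<sigma> \<tau> * v \<tau>))\<^sup>2) |v. (\<Sum>\<sigma>\<in>C. (cmod (v \<sigma>))\<^sup>2) \<le> 1} \<noteq> {}"
  proof -
    have "sqrt (\<Sum>\<sigma>\<in>C. (cmod (\<Sum>\<tau>\<in>C. M \<sigma> \<tau> * (\<lambda>_. 0) \<tau>))\<^sup>2) \<in> {sqrt (\<Sum>\<sigma>\<in>C. (cmod (\<Sum>\<tau>\<in>C. M \<sigma> \<tau> * v \<tau>))\<^sup>2) |v. (\<Sum>\<sigma>\<in>C. (cmod (v \<sigma>))\<^sup>2) \<le> 1}"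
      by (rule CollectI, rule exI[of _ "\<lambda>_. 0"]) simp
    then show ?thesis by (metis empty_iff)
  qed
next
  fix u assume "u \<in> {sqrt (\<Sum>\<sigma>\<in>C. (cmod (\<Sum>\<tau>\<in>C. M \<sigma> \<tau> * v \<tau>))\<^sup>2) |v. (\<Sum>\<sigma>\<in>C. (cmod (v \<sigma>))\<^sup>2) \<le> 1}"
  then obtain v where u: "u = sqrt (\<Sum>\<sigma>\<in>C. (cmod (\<Sum>\<tau>\<in>C. M \<sigma> \<tau> * v \<tau>))\<^sup>2)" and v: "(\<Sum>\<sigma>\<in>C. (cmod (v \<sigma>))\<^sup>2) \<le> 1"
    by auto
  have key: "\<And>\<sigma>. \<sigma> \<in> C \<Longrightarrow> (cmod (\<Sum>\<tau>\<in>C. M \<sigma> \<tau> * v \<tau>))\<^sup>2 \<le> r * (\<Sum>\<tau>\<in>C. cmod (M \<sigma> \<tau>) * (cmod (v \<tau>))\<^sup>2)"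
  proof -
    fix \<sigma> assume s: "\<sigma> \<in> C"
    have "cmod (\<Sum>\<tau>\<in>C. M \<sigma> \<tau> * v \<tau>) \<le> (\<Sum>\<tau>\<in>C. sqrt (cmod (M \<sigma> \<tau>)) * (sqrt (cmod (M \<sigma> \<tau>)) * cmod (v \<tau>)))"
      by (rule order_trans[OF norm_sum]) (simp add: norm_mult mult.assoc[symmetric])
    then have "(cmod (\<Sum>\<tau>\<in>C. M \<sigma> \<tau> * v \<tau>))\<^sup>2 \<le> (\<Sum>\<tau>\<in>C. sqrt (cmod (M \<sigma> \<tau>)) * (sqrt (cmod (M \<sigma> \<tau>)) * cmod (v \<tau>)))\<^sup>2"
      by (intro power_mono) auto
    also have "\<dots> \<le> (\<Sum>\<tau>\<in>C. (sqrt (cmod (M \<sigma> \<tau>)))\<^sup>2) * (\<Sum>\<tau>\<in>C. (sqrt (cmod (M \<sigma> \<tau>)) * cmod (v \<tau>))\<^sup>2)"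
      by (rule Cauchy_Schwarz_ineq_sum)
    also have "\<dots> = (\<Sum>\<tau>\<in>C. cmod (M \<sigma> \<tau>)) * (\<Sum>\<tau>\<in>C. cmod (M \<sigma> \<tau>) * (cmod (v \<tau>))\<^sup>2)"
      by (simp add: power_mult_distrib)
    also have "\<dots> \<le> r * (\<Sum>\<tau>\<in>C. cmod (M \<sigma> \<tau>) * (cmod (v \<tau>))\<^sup>2)"
      using b s unfolding bnd_def by (intro mult_right_mono sum_nonneg) auto
    finally show "(cmod (\<Sum>\<tau>\<in>C. M \<sigma> \<tau> * v \<tau>))\<^sup>2 \<le> r * (\<Sum>\<tau>\<in>C. cmod (M \<sigma> \<tau>) * (cmod (v \<tau>))\<^sup>2)" .
  qed
  have "(\<Sum>\<sigma>\<in>C. (cmod (\<Sum>\<tau>\<in>C. M \<sigma> \<tau> * v \<tau>))\<^sup>2) \<le> (\<Sum>\<sigma>\<in>C. r * (\<Sum>\<tau>\<in>C. cmod (M \<sigma> \<tau>) * (cmod (v \<tau>))\<^sup>2))"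
    by (rule sum_mono) (rule key)
  also have "\<dots> = r * (\<Sum>\<tau>\<in>C. (\<Sum>\<sigma>\<in>C. cmod (M \<sigma> \<tau>)) * (cmod (v \<tau>))\<^sup>2)"
    by (simp add: sum_distrib_left[symmetric] sum_distrib_right) (rule disjI2, rule sum.swap)
  also have "\<dots> \<le> r * (\<Sum>\<tau>\<in>C. r * (cmod (v \<tau>))\<^sup>2)"
    using b r unfolding bnd_def by (intro mult_left_mono sum_mono mult_right_mono) auto
  also have "\<dots> = r * r * (\<Sum>\<tau>\<in>C. (cmod (v \<tau>))\<^sup>2)"
    by (simp add: sum_distrib_left mult.assoc)
  also have "\<dots> \<le> r * r" using v r by (intro mult_left_le) auto
  finally have "(\<Sum>\<sigma>\<in>C. (cmod (\<Sum>\<tau>\<in>C. M \<sigma> \<tau> * v \<tau>))\<^sup>2) \<le> r\<^sup>2" by (simp add: power2_eq_square)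
  then have "u \<le> sqrt (r\<^sup>2)" unfolding u by (rule real_sqrt_le_mono)
  then show "u \<le> r" using r by simp
qed



lemma ap_le: "ap n l \<le> real n + 1"
proof -
  have "(n - l) * (l + 1) \<le> (n + 1) * (n + 1)" proof (cases "l \<le> n")
    case True then show ?thesis by (intro mult_le_mono) auto
  qed simp
  then have "real ((n - l) * (l + 1)) \<le> real ((n + 1) * (n + 1))" by (simp only: of_nat_le_iff)
  also have "\<dots> = (real n + 1)^2" by (simp add: power2_eq_square algebra_simps)
  finally have "real ((n - l) * (l + 1)) \<le> (real n + 1)^2" .
  then have "ap n l \<le> sqrt ((real n + 1)^2)" unfolding ap_def by (rule real_sqrt_le_mono)
  then show ?thesis by simp
qed

lemma ap_nonneg: "0 \<le> ap n l" unfolding ap_def by simp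

lemma Splus_bnd: "l \<le> n \<Longrightarrow> cmod (Splus n k l) \<le> real n + 1"
  using ap_le ap_nonneg by (simp add: Splus_eq)
lemma Sminus_bnd: "k \<le> n \<Longrightarrow> cmod (Sminus n k l) \<le> real n + 1"
  using ap_le ap_nonneg by (simp add: Sminus_eq)

lemma spin_bnd: assumes "k \<le> n" "l \<le> n" shows "cmod (spin n a k l) \<le> real n + 1"
proof -
  have P: "cmod (Splus n k l) \<le> real n + 1" and M: "cmod (Sminus n k l) \<le> real n + 1"
    using assms Splus_bnd Sminus_bnd by auto
  have 1: "cmod ((Splus n k l + Sminus n k l) / 2) \<le> real n + 1"
    using norm_triangle_ineq[of "Splus n k l" "Sminus n k l"] P M by (simp add: norm_divide)
  have 2: "cmod ((Splus n k l - Sminus n k l) / (2 * \<i>)) \<le> real n + 1"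
    using norm_triangle_ineq4[of "Splus n k l" "Sminus n k l"] P M by (simp add: norm_divide norm_mult)
  have 3: "\<bar>mval n k\<bar> \<le> real n + 1" using assms unfolding mval_def by auto
  show ?thesis unfolding spin_def using 1 2 3 by auto
qed

lemma agree_sym: "agree x \<sigma> \<tau> = agree x \<tau> \<sigma>" unfolding agree_def by auto

lemma Sop_bnd:
  assumes x: "x \<in> Lambda d L"
  shows "bnd (confs d n L) (Sop n x a) ((real n + 1) * (real n + 1))"
  unfolding bnd_def
proof (intro conjI ballI)
  fix \<sigma> assume s: "\<sigma> \<in> confs d n L"
  have "(\<Sum>\<tau>\<in>confs d n L. cmod (Sop n x a \<sigma> \<tau>)) = (\<Sum>\<tau>\<in>confs d n L. if agree x \<sigma> \<tau> then cmod (spin n a (\<sigma> x) (\<tau> x)) else 0)"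
    unfolding Sop_agree by (rule sum.cong) auto
  also have "\<dots> = (\<Sum>j\<le>n. cmod (spin n a (\<sigma> x) j))" by (subst reindexR[OF s x]) simp
  also have "\<dots> \<le> (\<Sum>j\<le>n. real n + 1)" using conf_le[OF s x] by (intro sum_mono spin_bnd) auto
  also have "\<dots> = (real n + 1) * (real n + 1)" by (simp add: algebra_simps)
  finally show "(\<Sum>\<tau>\<in>confs d n L. cmod (Sop n x a \<sigma> \<tau>)) \<le> (real n + 1) * (real n + 1)" .
next
  fix \<tau> assume s: "\<tau> \<in> confs d n L"
  have "(\<Sum>\<sigma>\<in>confs d n L. cmod (Sop n x a \<sigma> \<tau>)) = (\<Sum>\<sigma>\<in>confs d n L. if agree x \<tau> \<sigma> then cmod (spin n a (\<sigma> x) (\<tau> x)) else 0)"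
    unfolding Sop_agree by (rule sum.cong) (auto simp: agree_sym)
  also have "\<dots> = (\<Sum>j\<le>n. cmod (spin n a j (\<tau> x)))" by (subst reindexR[OF s x]) simp
  also have "\<dots> \<le> (\<Sum>j\<le>n. real n + 1)" using conf_le[OF s x] by (intro sum_mono spin_bnd) auto
  also have "\<dots> = (real n + 1) * (real n + 1)" by (simp add: algebra_simps)
  finally show "(\<Sum>\<sigma>\<in>confs d n L. cmod (Sop n x a \<sigma> \<tau>)) \<le> (real n + 1) * (real n + 1)" .
qed

definition Kspin :: "nat \<Rightarrow> real" where "Kspin n = 12 * ((real n + 1) * (real n + 1))^4"

lemma edge_bound:
  fixes h :: "site \<Rightarrow> complex" and n d L :: nat
  assumes xy: "x \<noteq> y" and x: "x \<in> Lambda d L" and y: "y \<in> Lambda d L"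
  shows "opnorm (confs d n L) (opcomm (confs d n L) (opcomm (confs d n L) (opsum (Lambda d L) (\<lambda>z. opsc (h z) (Sop n z 1))) (sdot d n L x y)) (opsum (Lambda d L) (\<lambda>z. opsc (h z) (Sop n z 1))))
     \<le> cmod ((h x - h y)^2) * Kspin n"
proof -
  let ?C = "confs d n L"
  let ?s = "(real n + 1) * (real n + 1)"
  have s0: "0 \<le> ?s" by simp
  have fin: "finite ?C" by (rule finite_confs)
  have bA: "bnd ?C (sdot d n L x y) (3 * (?s * ?s))"
    unfolding sdot_opsum using bnd_sum[of "{1,2,3::nat}" ?C "\<lambda>a. opmult ?C (Sop n x a) (Sop n y a)" "?s * ?s"]
      bnd_mult[OF fin Sop_bnd[OF x] Sop_bnd[OF y] s0 s0] by simp
  have bD: "bnd ?C (opcomm ?C (Sop n x 1) (sdot d n L x y)) (2 * (?s * (3 * (?s * ?s))))"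
    by (rule bnd_comm[OF fin Sop_bnd[OF x] bA]) auto
  have bE: "bnd ?C (opcomm ?C (opcomm ?C (Sop n x 1) (sdot d n L x y)) (Sop n x 1)) (2 * ((2 * (?s * (3 * (?s * ?s)))) * ?s))"
    by (rule bnd_comm[OF fin bD Sop_bnd[OF x]]) auto
  have bF: "bnd ?C (opsc ((h x - h y)^2) (opcomm ?C (opcomm ?C (Sop n x 1) (sdot d n L x y)) (Sop n x 1))) (cmod ((h x - h y)^2) * Kspin n)"
  proof -
    have "Kspin n = 2 * ((2 * (?s * (3 * (?s * ?s)))) * ?s)"
      unfolding Kspin_def by (simp add: eval_nat_numeral ac_simps)
    then show ?thesis using bnd_sc[OF bE] by simp
  qed
  show ?thesis
    unfolding opnorm_eqC[OF double_comm[OF xy x y]]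
    by (rule schur[OF fin bF]) (simp add: Kspin_def)
qed



lemma L_big:
  assumes d: "d \<ge> 1" and sub: "Omega d (2 * int R + 1) \<subseteq> Lambda d L"
  shows "2 * int R + 2 \<le> int L"
proof -
  let ?p = "(\<lambda>i. if i < d then - (2 * int R + 1) else 0) :: site"
  have "?p \<in> Omega d (2 * int R + 1)" unfolding Omega_def by auto
  then have "?p \<in> Lambda d L" using sub by blast
  then have "\<forall>i<d. - int L + 1 \<le> ?p i" unfolding Lambda_def by blast
  moreover have "0 < d" using d by simp
  ultimately have "- int L + 1 \<le> ?p 0" by blast
  moreover have "?p 0 = - (2 * int R + 1)" using d by simp
  ultimately show ?thesis by linarith
qed

lemma mod1: fixes a m :: int assumes "m > 0" "-m \<le> a" "a < m" "a mod m = 1" shows "a = 1 \<or> a = 1 - m"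
proof (cases "a \<ge> 0")
  case True then show ?thesis using assms by (simp add: mod_pos_pos_trivial)
next
  case False
  have "a mod m = (a + m) mod m" by simp
  also have "\<dots> = a + m" using assms False by (intro mod_pos_pos_trivial) auto
  finally show ?thesis using assms by auto
qed

definition wr :: "nat \<Rightarrow> int \<Rightarrow> int" where "wr L c = (if c = - int L then int L else c)"
definition nb :: "nat \<Rightarrow> site \<Rightarrow> nat \<Rightarrow> int \<Rightarrow> site" where "nb L x i s = x(i := wr L (x i + s))"

lemma adjT_sym: "adjT d L x y = adjT d L y x"
  unfolding adjT_def by (metis (no_types, opaque_lifting))

lemma nbr_imp:
  assumes L2: "int L \<ge> 2" and x: "x \<in> Lambda d L" and xb: "\<forall>i<d. x i \<le> int L - 1"
    and w: "w \<in> Lambda d L" and adj: "adjT d L x w"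
  shows "\<exists>i<d. \<exists>s\<in>{1,-1}. w = nb L x i s"
proof -
  obtain i where i: "i < d" and eq: "\<forall>j. j \<noteq> i \<longrightarrow> x j = w j"
    and c: "(x i - w i) mod (2 * int L) = 1 \<or> (w i - x i) mod (2 * int L) = 1"
    using adj unfolding adjT_def by blast
  have xi: "- int L + 1 \<le> x i" "x i \<le> int L - 1" using x xb i unfolding Lambda_def by auto
  have wi: "- int L + 1 \<le> w i" "w i \<le> int L" using w i unfolding Lambda_def by auto
  have weq: "w = x(i := w i)" using eq by (auto simp: fun_eq_iff)
  from c show ?thesis
  proof
    assume c1: "(x i - w i) mod (2 * int L) = 1"
    have "x i - w i = 1 \<or> x i - w i = 1 - 2 * int L"
      by (rule mod1[OF _ _ _ c1]) (use xi wi L2 in auto)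
    then have "w i = wr L (x i + -1)" unfolding wr_def using xi wi by auto
    then show ?thesis using i weq unfolding nb_def by (intro exI[of _ i]) auto
  next
    assume c1: "(w i - x i) mod (2 * int L) = 1"
    have "w i - x i = 1 \<or> w i - x i = 1 - 2 * int L"
      by (rule mod1[OF _ _ _ c1]) (use xi wi L2 in auto)
    then have "w i = wr L (x i + 1)" unfolding wr_def using xi wi by auto
    then show ?thesis using i weq unfolding nb_def by (intro exI[of _ i]) auto
  qed
qed

lemma nb_in:
  assumes L2: "int L \<ge> 2" and x: "x \<in> Lambda d L" and xb: "\<forall>i<d. x i \<le> int L - 1"
    and i: "i < d" and s: "s \<in> {1,-1}"
  shows "nb L x i s \<in> Lambda d L" and "adjT d L x (nb L x i s)"
proof -
  have xi: "- int L + 1 \<le> x i" "x i \<le> int L - 1" using x xb i unfolding Lambda_def by auto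
  show "nb L x i s \<in> Lambda d L"
    using x xi s i unfolding Lambda_def nb_def wr_def by auto
  have "(x i - nb L x i s i) mod (2 * int L) = 1 \<or> (nb L x i s i - x i) mod (2 * int L) = 1"
  proof (cases "s = 1")
    case True then show ?thesis using L2 xi unfolding nb_def wr_def by auto
  next
    case False
    then have s1: "s = -1" using s by auto
    show ?thesis
    proof (cases "x i - 1 = - int L")
      case True
      then have "x i - nb L x i s i = 1 + (-1) * (2 * int L)" using s1 unfolding nb_def wr_def by auto
      then have "(x i - nb L x i s i) mod (2 * int L) = 1 mod (2 * int L)" by (metis mod_mult_self1)
      then show ?thesis using L2 by auto
    next
      case False then show ?thesis using s1 L2 unfolding nb_def wr_def by auto
    qed
  qed
  then show "adjT d L x (nb L x i s)" unfolding adjT_def nb_def using i by auto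
qed



definition hr :: "nat \<Rightarrow> nat \<Rightarrow> nat \<Rightarrow> site \<Rightarrow> real" where
  "hr d L R z = (\<Sum>e\<in>{e\<in>edgesT d L. z \<in> e}. \<Sum>u\<in>e. fcut d R u)"

lemma edges_sub: "e \<in> edgesT d L \<Longrightarrow> e \<subseteq> Lambda d L"
  unfolding edgesT_def by auto

lemma finite_edgesT: "finite (edgesT d L)"
proof -
  have "edgesT d L \<subseteq> Pow (Lambda d L)" using edges_sub by blast
  then show ?thesis using finite_Lambda finite_subset by blast
qed

lemma H1'_eq: "H1' d n L R = opsum (Lambda d L) (\<lambda>z. opsc (complex_of_real (hr d L R z)) (Sop n z 1))"
proof (intro ext)
  fix \<sigma> \<tau>
  have "H1' d n L R \<sigma> \<tau> = (\<Sum>e\<in>edgesT d L. \<Sum>z\<in>{z\<in>Lambda d L. z \<in> e}. complex_of_real (\<Sum>u\<in>e. fcut d R u) * Sop n z 1 \<sigma> \<tau>)"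
    unfolding H1'_def
  proof (rule sum.cong[OF refl])
    fix e assume "e \<in> edgesT d L"
    then have "{z\<in>Lambda d L. z \<in> e} = e" using edges_sub by blast
    then show "complex_of_real (\<Sum>z\<in>e. fcut d R z) * (\<Sum>z\<in>e. Sop n z 1 \<sigma> \<tau>) =
        (\<Sum>z\<in>{z\<in>Lambda d L. z \<in> e}. complex_of_real (\<Sum>u\<in>e. fcut d R u) * Sop n z 1 \<sigma> \<tau>)"
      by (simp add: sum_distrib_left)
  qed
  also have "\<dots> = (\<Sum>z\<in>Lambda d L. \<Sum>e\<in>{e\<in>edgesT d L. z \<in> e}. complex_of_real (\<Sum>u\<in>e. fcut d R u) * Sop n z 1 \<sigma> \<tau>)"
    by (rule sum.swap_restrict[OF finite_edgesT finite_Lambda])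
  also have "\<dots> = opsum (Lambda d L) (\<lambda>z. opsc (complex_of_real (hr d L R z)) (Sop n z 1)) \<sigma> \<tau>"
    unfolding opsum_def opsc_def hr_def by (simp add: sum_distrib_right)
  finally show "H1' d n L R \<sigma> \<tau> = opsum (Lambda d L) (\<lambda>z. opsc (complex_of_real (hr d L R z)) (Sop n z 1)) \<sigma> \<tau>" .
qed

lemma edges_at:
  assumes L2: "int L \<ge> 2" and x: "x \<in> Lambda d L" and xb: "\<forall>i<d. x i \<le> int L - 1"
  shows "{e\<in>edgesT d L. x \<in> e} = (\<lambda>(i,s). {x, nb L x i s}) ` ({..<d} \<times> {1,-1})"
proof
  show "{e\<in>edgesT d L. x \<in> e} \<subseteq> (\<lambda>(i,s). {x, nb L x i s}) ` ({..<d} \<times> {1,-1})"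
  proof
    fix e assume "e \<in> {e\<in>edgesT d L. x \<in> e}"
    then obtain a b where e: "e = {a,b}" and a: "a \<in> Lambda d L" and b: "b \<in> Lambda d L"
      and ab: "adjT d L a b" and xe: "x \<in> e" unfolding edgesT_def by blast
    obtain w where w: "w \<in> Lambda d L" "adjT d L x w" "e = {x, w}"
      using xe e a b ab adjT_sym by (metis insert_commute insertE singletonD)
    obtain i s where "i < d" "s \<in> {1,-1}" "w = nb L x i s"
      using nbr_imp[OF L2 x xb w(1,2)] by blast
    then show "e \<in> (\<lambda>(i,s). {x, nb L x i s}) ` ({..<d} \<times> {1,-1})"
      using w(3) by (intro image_eqI[where x="(i,s)"]) auto
  qed
next
  show "(\<lambda>(i,s). {x, nb L x i s}) ` ({..<d} \<times> {1,-1}) \<subseteq> {e\<in>edgesT d L. x \<in> e}"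
  proof
    fix e assume "e \<in> (\<lambda>(i,s). {x, nb L x i s}) ` ({..<d} \<times> {1,-1::int})"
    then obtain i s where iis: "i < d" "s \<in> {1,-1::int}" and e: "e = {x, nb L x i s}" by blast
    show "e \<in> {e\<in>edgesT d L. x \<in> e}"
      using nb_in[OF L2 x xb iis] x e unfolding edgesT_def by blast
  qed
qed

lemma nb_ne:
  assumes L2: "int L \<ge> 2" and xb: "x i \<le> int L - 1"
  shows "nb L x i s \<noteq> x \<or> s = 0"
proof -
  have "wr L (x i + s) \<noteq> x i \<or> s = 0" using xb unfolding wr_def by auto
  then show ?thesis unfolding nb_def by (metis fun_upd_same)
qed

lemma nb_inj:
  assumes L2: "int L \<ge> 2" and x: "x \<in> Lambda d L" and xb: "\<forall>i<d. x i \<le> int L - 1"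
  shows "inj_on (\<lambda>(i,s). {x, nb L x i s}) ({..<d} \<times> {1,-1})"
proof (rule inj_onI, clarify)
  fix i s j t assume i: "i < d" "s \<in> {1,-1::int}" and j: "j < d" "t \<in> {1,-1::int}"
    and eq: "{x, nb L x i s} = {x, nb L x j t}"
  have xi: "- int L + 1 \<le> x i" "x i \<le> int L - 1" using x xb i unfolding Lambda_def by auto
  have n1: "nb L x i s \<noteq> x" using nb_ne[OF L2, of x i s] xi i by auto
  have n2: "nb L x j t \<noteq> x" using nb_ne[OF L2, of x j t] xb j by auto
  have e: "nb L x i s = nb L x j t" using eq n1 n2 by (metis doubleton_eq_iff)
  show "i = j \<and> s = t"
  proof (cases "i = j")
    case True
    then have "wr L (x i + s) = wr L (x i + t)" using e unfolding nb_def by (metis fun_upd_same)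
    then have "s = t" using i j xi L2 unfolding wr_def by (auto split: if_splits)
    then show ?thesis using True by simp
  next
    case False
    then have "nb L x j t i = x i" unfolding nb_def by simp
    moreover have "nb L x i s i \<noteq> x i" using n1 unfolding nb_def by (metis fun_upd_triv fun_upd_same)
    ultimately show ?thesis using e by simp
  qed
qed

lemma hr_eq:
  assumes L2: "int L \<ge> 2" and x: "x \<in> Lambda d L" and xb: "\<forall>i<d. x i \<le> int L - 1"
  shows "hr d L R x = (\<Sum>(i,s)\<in>{..<d} \<times> {1,-1}. fcut d R x + fcut d R (nb L x i s))"
proof -
  have "hr d L R x = (\<Sum>p\<in>{..<d} \<times> {1,-1}. \<Sum>u\<in>{x, nb L x (fst p) (snd p)}. fcut d R u)"
    unfolding hr_def edges_at[OF L2 x xb] by (subst sum.reindex[OF nb_inj[OF L2 x xb]]) (simp add: case_prod_beta)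
  also have "\<dots> = (\<Sum>(i,s)\<in>{..<d} \<times> {1,-1}. fcut d R x + fcut d R (nb L x i s))"
  proof (rule sum.cong[OF refl], clarify)
    fix i s assume "i < d" "s \<in> {1,-1::int}"
    then have "nb L x i s \<noteq> x" using nb_ne[OF L2, of x i s] xb by auto
    then show "(\<Sum>u\<in>{x, nb L x (fst (i,s)) (snd (i,s))}. fcut d R u) = fcut d R x + fcut d R (nb L x i s)"
      by simp
  qed
  finally show ?thesis .
qed



lemma supnorm_le_iff:
  assumes d: "d \<ge> 1" shows "supnorm d u \<le> N \<longleftrightarrow> (\<forall>i<d. \<bar>u i\<bar> \<le> N)"
proof -
  have "0 \<in> {..<d}" using d by simp
  then have "{..<d} \<noteq> {}" by blast
  then show ?thesis unfolding supnorm_def by (subst Max_le_iff) auto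
qed

lemma supnorm_ge: "i < d \<Longrightarrow> \<bar>u i\<bar> \<le> supnorm d u"
  unfolding supnorm_def by (rule Max_ge) auto

lemma supnorm_attained: "d \<ge> 1 \<Longrightarrow> \<exists>i<d. supnorm d u = \<bar>u i\<bar>"
proof -
  assume d: "d \<ge> 1"
  have "0 \<in> {..<d}" using d by simp
  then have "{..<d} \<noteq> {}" by blast
  then have "supnorm d u \<in> (\<lambda>i. \<bar>u i\<bar>) ` {..<d}" unfolding supnorm_def by (intro Max_in) auto
  then show ?thesis by auto
qed

lemma Omega_iff:
  assumes d: "d \<ge> 1" and van: "\<forall>i\<ge>d. u i = 0"
  shows "u \<in> Omega d N \<longleftrightarrow> supnorm d u \<le> N"
  unfolding Omega_def supnorm_le_iff[OF d] using van by auto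

definition clamp :: "real \<Rightarrow> real" where "clamp a = max 0 (min 1 a)"

lemma clamp_lip: "\<bar>clamp a - clamp b\<bar> \<le> \<bar>a - b\<bar>"
  unfolding clamp_def by (auto simp: max_def min_def)

lemma fcut_eq:
  assumes d: "d \<ge> 1" and R: "R \<ge> 1" and van: "\<forall>i\<ge>d. u i = 0"
  shows "fcut d R u = clamp ((2 * real R + 1 - real_of_int (supnorm d u)) / real R)"
proof -
  let ?t = "supnorm d u"
  have Rp: "real R > 0" using R by simp
  consider "?t \<le> int R + 1" | "int R + 1 < ?t" "?t \<le> 2 * int R" | "2 * int R < ?t" by linarith
  then show ?thesis
  proof cases
    case 1
    then have "1 \<le> (2 * real R + 1 - real_of_int ?t) / real R" using Rp by (simp add: field_simps)
    then show ?thesis unfolding fcut_def Omega_iff[OF d van] using 1 by (simp add: clamp_def)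
  next
    case 2
    have "(2 * real R + 1 - real_of_int ?t) / real R = 1 - (real_of_int ?t - (real R + 1)) / real R"
      using Rp by (simp add: field_simps)
    moreover have "0 \<le> 1 - (real_of_int ?t - (real R + 1)) / real R" "1 - (real_of_int ?t - (real R + 1)) / real R \<le> 1"
      using 2 Rp by (auto simp: field_simps)
    ultimately show ?thesis unfolding fcut_def Omega_iff[OF d van] using 2 by (simp add: clamp_def)
  next
    case 3
    then have "(2 * real R + 1 - real_of_int ?t) / real R \<le> 0" using Rp by (simp add: field_simps)
    then show ?thesis unfolding fcut_def Omega_iff[OF d van] using 3 R by (simp add: clamp_def)
  qed
qed

lemma supnorm_lip:
  assumes d: "d \<ge> 1" and c: "\<forall>i<d. \<bar>u i - v i\<bar> \<le> 1"
  shows "\<bar>supnorm d u - supnorm d v\<bar> \<le> 1"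
proof -
  obtain i where i: "i < d" "supnorm d u = \<bar>u i\<bar>" using supnorm_attained[OF d] by blast
  obtain j where j: "j < d" "supnorm d v = \<bar>v j\<bar>" using supnorm_attained[OF d] by blast
  have "\<bar>v i\<bar> \<le> supnorm d v" "\<bar>u j\<bar> \<le> supnorm d u" using supnorm_ge[OF i(1), of v] supnorm_ge[OF j(1), of u] by auto
  moreover have "\<bar>u i - v i\<bar> \<le> 1" "\<bar>u j - v j\<bar> \<le> 1" using c i j by auto
  ultimately show ?thesis using i j by linarith
qed

lemma fcut_lip:
  assumes d: "d \<ge> 1" and R: "R \<ge> 1" and vu: "\<forall>i\<ge>d. u i = 0" and vv: "\<forall>i\<ge>d. v i = 0"
    and c: "\<forall>i<d. \<bar>u i - v i\<bar> \<le> 1"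
  shows "\<bar>fcut d R u - fcut d R v\<bar> \<le> 1 / real R"
proof -
  have Rp: "real R > 0" using R by simp
  have "\<bar>fcut d R u - fcut d R v\<bar> \<le> \<bar>(2 * real R + 1 - real_of_int (supnorm d u)) / real R - (2 * real R + 1 - real_of_int (supnorm d v)) / real R\<bar>"
    unfolding fcut_eq[OF d R vu] fcut_eq[OF d R vv] by (rule clamp_lip)
  also have "(2 * real R + 1 - real_of_int (supnorm d u)) / real R - (2 * real R + 1 - real_of_int (supnorm d v)) / real R
      = real_of_int (supnorm d v - supnorm d u) / real R"
    using Rp by (simp add: field_simps)
  also have "\<bar>real_of_int (supnorm d v - supnorm d u) / real R\<bar> = \<bar>real_of_int (supnorm d u - supnorm d v)\<bar> / real R"
    by (simp add: abs_divide abs_minus_commute)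
  also have "\<dots> \<le> 1 / real R"
    using supnorm_lip[OF d c] Rp by (intro divide_right_mono) linarith+
  finally show ?thesis .
qed

lemma fcut_far:
  assumes d: "d \<ge> 1" and R: "R \<ge> 1" and van: "\<forall>i\<ge>d. u i = 0" and i: "i < d" and far: "\<bar>u i\<bar> \<ge> 2 * int R + 1"
  shows "fcut d R u = 0"
proof -
  have "supnorm d u \<ge> 2 * int R + 1" using supnorm_ge[OF i, of u] far by linarith
  then have "(2 * real R + 1 - real_of_int (supnorm d u)) / real R \<le> 0"
    using R by (simp add: divide_nonpos_pos)
  then show ?thesis unfolding fcut_eq[OF d R van] clamp_def by simp
qed



lemma Omega_van: "u \<in> Omega d N \<Longrightarrow> \<forall>i\<ge>d. u i = 0" unfolding Omega_def by auto

lemma f_nb: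
  assumes d: "d \<ge> 1" and R: "R \<ge> 1" and Lb: "2 * int R + 2 \<le> int L"
    and x: "x \<in> Omega d (2 * int R + 1)" and i: "i < d" and s: "s \<in> {1,-1::int}"
  shows "fcut d R (nb L x i s) = fcut d R (x(i := x i + s))"
proof (cases "x i + s = - int L")
  case True
  have van: "\<forall>j\<ge>d. x j = 0" using Omega_van[OF x] .
  have a: "fcut d R (nb L x i s) = 0"
    by (rule fcut_far[OF d R _ i]) (use van i True Lb in \<open>auto simp: nb_def wr_def\<close>)
  have b: "fcut d R (x(i := x i + s)) = 0"
    by (rule fcut_far[OF d R _ i]) (use van i True Lb in auto)
  show ?thesis using a b by simp
next
  case False then show ?thesis unfolding nb_def wr_def by simp
qed

lemma hr_diff:
  assumes d: "d \<ge> 1" and R: "R \<ge> 1" and sub: "Omega d (2 * int R + 1) \<subseteq> Lambda d L"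
    and x: "x \<in> Omega d (2 * int R + 1)" and y: "y \<in> Omega d (2 * int R + 1)"
    and c: "\<forall>i<d. \<bar>x i - y i\<bar> \<le> 1"
  shows "\<bar>hr d L R x - hr d L R y\<bar> \<le> 4 * real d / real R"
proof -
  have Lb: "2 * int R + 2 \<le> int L" by (rule L_big[OF d sub])
  then have L2: "int L \<ge> 2" using R by linarith
  have xb: "\<forall>i<d. x i \<le> int L - 1"
  proof (intro allI impI)
    fix i assume "i < d"
    then have "\<bar>x i\<bar> \<le> 2 * int R + 1" using x unfolding Omega_def by blast
    then show "x i \<le> int L - 1" using Lb by linarith
  qed
  have yb: "\<forall>i<d. y i \<le> int L - 1"
  proof (intro allI impI)
    fix i assume "i < d"
    then have "\<bar>y i\<bar> \<le> 2 * int R + 1" using y unfolding Omega_def by blast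
    then show "y i \<le> int L - 1" using Lb by linarith
  qed
  have xL: "x \<in> Lambda d L" and yL: "y \<in> Lambda d L" using x y sub by auto
  have vx: "\<forall>i\<ge>d. x i = 0" and vy: "\<forall>i\<ge>d. y i = 0" using Omega_van x y by auto
  let ?P = "{..<d} \<times> {1,-1::int}"
  have eq: "hr d L R x - hr d L R y = (\<Sum>(i,s)\<in>?P. (fcut d R x - fcut d R y) + (fcut d R (x(i := x i + s)) - fcut d R (y(i := y i + s))))"
    unfolding hr_eq[OF L2 xL xb] hr_eq[OF L2 yL yb] sum_subtractf[symmetric]
    by (rule sum.cong[OF refl]) (auto simp: f_nb[OF d R Lb x] f_nb[OF d R Lb y])
  have "\<bar>hr d L R x - hr d L R y\<bar> \<le> (\<Sum>(i,s)\<in>?P. \<bar>(fcut d R x - fcut d R y) + (fcut d R (x(i := x i + s)) - fcut d R (y(i := y i + s)))\<bar>)"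
    unfolding eq by (rule order_trans[OF sum_abs]) (simp add: case_prod_beta)
  also have "\<dots> \<le> (\<Sum>(i,s)\<in>?P. 2 / real R)"
  proof (rule sum_mono, clarify)
    fix i s assume i: "i < d" and s: "s \<in> {1,-1::int}"
    have 1: "\<bar>fcut d R x - fcut d R y\<bar> \<le> 1 / real R" by (rule fcut_lip[OF d R vx vy c])
    have 2: "\<bar>fcut d R (x(i := x i + s)) - fcut d R (y(i := y i + s))\<bar> \<le> 1 / real R"
      by (rule fcut_lip[OF d R]) (use vx vy c i in auto)
    show "\<bar>(fcut d R x - fcut d R y) + (fcut d R (x(i := x i + s)) - fcut d R (y(i := y i + s)))\<bar> \<le> 2 / real R"
      using 1 2 by linarith
  qed
  also have "\<dots> = 4 * real d / real R" by (simp add: card_cartesian_product)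
  finally show ?thesis .
qed



lemma adjZ_coord: assumes "adjZ d x y" shows "\<forall>i<d. \<bar>x i - y i\<bar> \<le> 1"
proof (intro allI impI)
  fix i assume i: "i < d"
  have "(x i - y i)^2 \<le> (\<Sum>j<d. (x j - y j)^2)"
    by (rule member_le_sum) (use i in auto)
  then have "(x i - y i)^2 \<le> 1" using assms unfolding adjZ_def by simp
  then show "\<bar>x i - y i\<bar> \<le> 1" by (simp add: abs_square_le_1)
qed

lemma adjZ_ne: "adjZ d x y \<Longrightarrow> x \<noteq> y"
  unfolding adjZ_def by auto

lemma edge_norm:
  assumes d: "d \<ge> 1" and R: "R \<ge> 1" and sub: "Omega d (2 * int R + 1) \<subseteq> Lambda d L"
    and a: "a \<in> Omega d (2 * int R + 1)" and b: "b \<in> Omega d (2 * int R + 1)" and ab: "a \<noteq> b"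
    and c: "\<forall>i<d. \<bar>a i - b i\<bar> \<le> 1"
  shows "opnorm (confs d n L) (opcomm (confs d n L) (opcomm (confs d n L) (H1' d n L R) (sdot d n L a b)) (H1' d n L R))
     \<le> 16 * (real d)^2 * Kspin n / (real R)^2"
proof -
  have aL: "a \<in> Lambda d L" and bL: "b \<in> Lambda d L" using a b sub by auto
  have hd: "\<bar>hr d L R a - hr d L R b\<bar> \<le> 4 * real d / real R" by (rule hr_diff[OF d R sub a b c])
  have Ks: "0 \<le> Kspin n" unfolding Kspin_def by simp
  have "cmod ((complex_of_real (hr d L R a) - complex_of_real (hr d L R b))^2) = \<bar>hr d L R a - hr d L R b\<bar>^2"
    by (simp add: norm_power flip: of_real_diff)
  also have "\<dots> \<le> (4 * real d / real R)^2"
    by (rule power_mono[OF hd]) simp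
  finally have hq: "cmod ((complex_of_real (hr d L R a) - complex_of_real (hr d L R b))^2) \<le> (4 * real d / real R)^2" .
  have "opnorm (confs d n L) (opcomm (confs d n L) (opcomm (confs d n L) (H1' d n L R) (sdot d n L a b)) (H1' d n L R))
     \<le> cmod ((complex_of_real (hr d L R a) - complex_of_real (hr d L R b))^2) * Kspin n"
    unfolding H1'_eq by (rule edge_bound[OF ab aL bL])
  also have "\<dots> \<le> (4 * real d / real R)^2 * Kspin n"
    by (rule mult_right_mono[OF hq Ks])
  also have "\<dots> = 16 * (real d)^2 * Kspin n / (real R)^2"
    by (simp add: power_divide power_mult_distrib)
  finally show ?thesis .
qed

lemma card_edgesZ:
  "card (edgesZ d (Omega d N)) \<le> nat (2 * N + 1) ^ d * 3 ^ d"
proof -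
  let ?f = "\<lambda>(x, w). {x, (\<lambda>i. x i + w i)} :: site set"
  have sub: "edgesZ d (Omega d N) \<subseteq> ?f ` (Omega d N \<times> Omega d 1)"
  proof
    fix e assume "e \<in> edgesZ d (Omega d N)"
    then obtain x y where e: "e = {x, y}" and x: "x \<in> Omega d N" and y: "y \<in> Omega d N" and adj: "adjZ d x y"
      unfolding edgesZ_def by blast
    have "(\<lambda>i. y i - x i) \<in> Omega d 1"
      using adjZ_coord[OF adj] x y unfolding Omega_def by (auto simp: abs_minus_commute)
    moreover have "e = ?f (x, (\<lambda>i. y i - x i))" using e by auto
    ultimately show "e \<in> ?f ` (Omega d N \<times> Omega d 1)" using x by blast
  qed
  have fin: "finite (Omega d N \<times> Omega d 1)" using finite_Omega by auto
  have "card (edgesZ d (Omega d N)) \<le> card (?f ` (Omega d N \<times> Omega d 1))"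
    by (rule card_mono[OF finite_imageI[OF fin] sub])
  also have "\<dots> \<le> card (Omega d N \<times> Omega d 1)" by (rule card_image_le[OF fin])
  also have "\<dots> = card (Omega d N) * card (Omega d 1)" by (rule card_cartesian_product)
  also have "\<dots> \<le> nat (2 * N + 1) ^ d * nat (2 * 1 + 1) ^ d"
    using finite_Omega[of d N] finite_Omega[of d 1] by (intro mult_le_mono) auto
  finally show ?thesis by simp
qed

lemma sdot_edge_bound:
  assumes d: "d \<ge> 1" and R: "R \<ge> 1" and sub: "Omega d (2 * int R + 1) \<subseteq> Lambda d L"
    and e: "e \<in> edgesZ d (Omega d (2 * int R + 1))"
  shows "opnorm (confs d n L) (opcomm (confs d n L) (opcomm (confs d n L) (H1' d n L R) (sdot_edge d n L e)) (H1' d n L R))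
     \<le> 16 * (real d)^2 * Kspin n / (real R)^2"
proof -
  obtain x y where exy: "e = {x, y}" and x: "x \<in> Omega d (2 * int R + 1)" and y: "y \<in> Omega d (2 * int R + 1)" and adj: "adjZ d x y"
    using e unfolding edgesZ_def by blast
  define p where "p = (SOME p. e = {fst p, snd p})"
  have "e = {fst p, snd p}" unfolding p_def by (rule someI[where x="(x, y)"]) (simp add: exy)
  then have cases: "(fst p = x \<and> snd p = y) \<or> (fst p = y \<and> snd p = x)" using exy by (auto simp: doubleton_eq_iff)
  have se: "sdot_edge d n L e = sdot d n L (fst p) (snd p)" unfolding sdot_edge_def p_def Let_def ..
  have ne: "x \<noteq> y" by (rule adjZ_ne[OF adj])
  have c1: "\<forall>i<d. \<bar>x i - y i\<bar> \<le> 1" by (rule adjZ_coord[OF adj])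
  then have c2: "\<forall>i<d. \<bar>y i - x i\<bar> \<le> 1" by (simp add: abs_minus_commute)
  from cases show ?thesis
  proof
    assume "fst p = x \<and> snd p = y"
    then show ?thesis unfolding se using edge_norm[OF d R sub x y ne c1] by simp
  next
    assume "fst p = y \<and> snd p = x"
    then show ?thesis unfolding se using edge_norm[OF d R sub y x ne[symmetric] c2] by simp
  qed
qed

theorem lemma5p3:
  fixes d twoS :: nat
  assumes "d \<ge> 1"
  shows "\<exists>K::real. \<forall>R L :: nat. R \<ge> 1 \<longrightarrow> Omega d (2 * int R + 1) \<subseteq> Lambda d L \<longrightarrow>
     (\<Sum>e\<in>edgesZ d (Omega d (2 * int R + 1)).
        opnorm (confs d twoS L)
          (opcomm (confs d twoS L)
             (opcomm (confs d twoS L) (H1' d twoS L R) (sdot_edge d twoS L e))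
             (H1' d twoS L R)))
     \<le> K * real R powr (real d - 2)"
proof (intro exI allI impI)
  fix R L :: nat assume R: "R \<ge> 1" and sub: "Omega d (2 * int R + 1) \<subseteq> Lambda d L"
  let ?B = "16 * (real d)^2 * Kspin twoS / (real R)^2"
  let ?E = "edgesZ d (Omega d (2 * int R + 1))"
  have Rp: "real R > 0" using R by simp
  have B0: "0 \<le> ?B" unfolding Kspin_def by simp
  have "(\<Sum>e\<in>?E. opnorm (confs d twoS L) (opcomm (confs d twoS L) (opcomm (confs d twoS L) (H1' d twoS L R) (sdot_edge d twoS L e)) (H1' d twoS L R)))
      \<le> real (card ?E) * ?B"
    by (rule sum_bounded_above) (rule sdot_edge_bound[OF assms R sub])
  also have "real (card ?E) \<le> (21 * real R) ^ d"
  proof -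
    have "card ?E \<le> nat (2 * (2 * int R + 1) + 1) ^ d * 3 ^ d" by (rule card_edgesZ)
    then have "real (card ?E) \<le> real (nat (2 * (2 * int R + 1) + 1) ^ d * 3 ^ d)" by (simp only: of_nat_le_iff)
    also have "\<dots> = (3 + 4 * real R) ^ d * 3 ^ d" by simp
    also have "\<dots> \<le> (7 * real R) ^ d * 3 ^ d"
      using R by (intro mult_right_mono power_mono) auto
    also have "\<dots> = (21 * real R) ^ d" by (simp add: power_mult_distrib flip: power_mult_distrib[of "7::real" 3])
    finally show ?thesis .
  qed
  then have "real (card ?E) * ?B \<le> (21 * real R) ^ d * ?B" by (rule mult_right_mono[OF _ B0])
  also have "\<dots> = (21 ^ d * (16 * (real d)^2 * Kspin twoS)) * (real R ^ d / real R ^ 2)"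
    by (simp add: power_mult_distrib)
  also have "real R ^ d / real R ^ 2 = real R powr (real d - 2)"
    using Rp by (simp add: powr_diff powr_realpow)
  finally show "(\<Sum>e\<in>?E. opnorm (confs d twoS L) (opcomm (confs d twoS L) (opcomm (confs d twoS L) (H1' d twoS L R) (sdot_edge d twoS L e)) (H1' d twoS L R)))
      \<le> (21 ^ d * (16 * (real d)^2 * Kspin twoS)) * real R powr (real d - 2)" .
qed

end
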